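(* Let $M$ be a $3$-Kenmotsu manifold with structures $(\varphi_\alpha,\eta,\xi,g)$, $\alpha=1,2,3$, and let $H=\{X\in TM:\eta(X)=0\}$. Then for every nonzero $X\in H$, $$\mathbf{H}_1(X)+\mathbf{H}_2(X)+\mathbf{H}_3(X)=-3,$$ where $\mathbf{H}_\alpha(X)=-\dfrac{R(X,\varphi_\alpha X,X,\varphi_\alpha X)}{g(X,X)^2}$ is the $\varphi_\alpha$-holomorphic sectional curvature.
   Context: An almost contact metric structure $(\varphi,\eta,\xi,g)$ on an odd-dimensional manifold $M$ consists of a $(1,1)$-tensor $\varphi$, a vector field $\xi$, a $1$-form $\eta$ and a Riemannian metric $g$ with $\varphi^2X=-X+\eta(X)\xi$, $\eta(\xi)=1$, $\eta\circ\varphi=0$, $\varphi\xi=0$, $g(\varphi X,\varphi Y)=g(X,Y)-\eta(X)\eta(Y)$, $\eta(X)=g(\xi,X)$. It is Kenmotsu if $(\nabla_X\varphi)Y=g(\varphi X,Y)\xi-\eta(Y)\varphi X$ for all vector fields $X,Y$, with $\nabla$ the Levi-Civita connection of $g$. A $3$-Kenmotsu manifold is a smooth manifold $M$ equipped with three Kenmotsu structures $(\varphi_\alpha,\eta,\xi,g)$, $\alpha=1,2,3$ (same $\eta,\xi,g$), such that $\varphi_k=\varphi_i\circ\varphi_j$ for every even permutation $(i,j,k)$ of $(1,2,3)$. Curvature conventions: $R(X,Y)Z=\nabla_X\nabla_YZ-\nabla_Y\nabla_XZ-\nabla_{[X,Y]}Z$ and $R(X,Y,Z,W)=g(R(X,Y)Z,W)$;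 with these conventions $\mathbf{H}_\alpha(X)$ equals the sectional curvature of the plane spanned by $X$ and $\varphi_\alpha X$ (note $g(\varphi_\alpha X,\varphi_\alpha X)=g(X,X)$ and $g(X,\varphi_\alpha X)=0$ for $X\in H$). *)

theory Defs
  imports "HOL-Analysis.Analysis"
begin

text \<open>Local (coordinate) model: the manifold is an open set U of real^'n, tangent
vectors at a point are elements of real^'n, tensor fields are functions on U.\<close>

definition pd :: "'n::finite \<Rightarrow> (real^'n \<Rightarrow> real) \<Rightarrow> real^'n \<Rightarrow> real" where
  "pd i f x = deriv (\<lambda>t. f (x + t *\<^sub>R axis i 1)) 0"

definition smooth_fun_on :: "(real^'n::finite) set \<Rightarrow> (real^'n \<Rightarrow> real) \<Rightarrow> bool" where
  "smooth_fun_on U f \<longleftrightarrow>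
     (\<forall>is::'n list. continuous_on U (fold pd is f) \<and>
        (\<forall>i. \<forall>x\<in>U. ((\<lambda>t. fold pd is f (x + t *\<^sub>R axis i 1))
                      has_real_derivative pd i (fold pd is f) x) (at 0)))"

definition smooth_vf_on :: "(real^'n::finite) set \<Rightarrow> (real^'n \<Rightarrow> real^'n) \<Rightarrow> bool" where
  "smooth_vf_on U X \<longleftrightarrow> (\<forall>k. smooth_fun_on U (\<lambda>x. X x $ k))"

definition smooth_tf_on :: "(real^'n::finite) set \<Rightarrow> (real^'n \<Rightarrow> real^'n^'n) \<Rightarrow> bool" where
  "smooth_tf_on U A \<longleftrightarrow> (\<forall>k l. smooth_fun_on U (\<lambda>x. A x $ k $ l))"

definition gm :: "(real^'n::finite \<Rightarrow> real^'n^'n) \<Rightarrow> real^'n \<Rightarrow> real^'n \<Rightarrow> real^'n \<Rightarrow> real" where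
  "gm g p X Y = X \<bullet> (g p *v Y)"

definition riemannian_metric_on :: "(real^'n::finite) set \<Rightarrow> (real^'n \<Rightarrow> real^'n^'n) \<Rightarrow> bool" where
  "riemannian_metric_on U g \<longleftrightarrow> smooth_tf_on U g \<and>
     (\<forall>p\<in>U. transpose (g p) = g p \<and> (\<forall>X. X \<noteq> 0 \<longrightarrow> gm g p X X > 0))"

definition dd :: "real^'n::finite \<Rightarrow> (real^'n \<Rightarrow> real^'n) \<Rightarrow> real^'n \<Rightarrow> real^'n" where
  "dd v Y p = (\<chi> k. \<Sum>i\<in>UNIV. v $ i * pd i (\<lambda>y. Y y $ k) p)"

definition christoffel :: "(real^'n::finite \<Rightarrow> real^'n^'n) \<Rightarrow> real^'n \<Rightarrow> real^'n \<Rightarrow> real^'n \<Rightarrow> real^'n" where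
  "christoffel g p v w = matrix_inv (g p) *v
     (\<chi> l. (1/2) * (\<Sum>i\<in>UNIV. \<Sum>j\<in>UNIV. v $ i * w $ j *
        (pd i (\<lambda>y. g y $ j $ l) p + pd j (\<lambda>y. g y $ i $ l) p - pd l (\<lambda>y. g y $ i $ j) p)))"

definition nabla :: "(real^'n::finite \<Rightarrow> real^'n^'n) \<Rightarrow> real^'n \<Rightarrow> (real^'n \<Rightarrow> real^'n) \<Rightarrow> real^'n \<Rightarrow> real^'n" where
  "nabla g v Y p = dd v Y p + christoffel g p v (Y p)"

text \<open>R(u,v)w = nabla_u nabla_v w - nabla_v nabla_u w - nabla_[u,v] w, computed with the
coordinate-constant extensions of u, v, w (whose bracket vanishes); R is tensorial.\<close>
definition curv :: "(real^'n::finite \<Rightarrow> real^'n^'n) \<Rightarrow> real^'n \<Rightarrow> real^'n \<Rightarrow> real^'n \<Rightarrow> real^'n \<Rightarrow> real^'n" where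
  "curv g p u v w = nabla g u (\<lambda>q. nabla g v (\<lambda>_. w) q) p - nabla g v (\<lambda>q. nabla g u (\<lambda>_. w) q) p"

definition curv4 :: "(real^'n::finite \<Rightarrow> real^'n^'n) \<Rightarrow> real^'n \<Rightarrow> real^'n \<Rightarrow> real^'n \<Rightarrow> real^'n \<Rightarrow> real^'n \<Rightarrow> real" where
  "curv4 g p X Y Z W = gm g p (curv g p X Y Z) W"

text \<open>eta is a covector field, eta(X) at p is eta p \<bullet> X.\<close>
definition almost_contact_metric_on ::
  "(real^'n::finite) set \<Rightarrow> (real^'n \<Rightarrow> real^'n^'n) \<Rightarrow> (real^'n \<Rightarrow> real^'n) \<Rightarrow> (real^'n \<Rightarrow> real^'n)
   \<Rightarrow> (real^'n \<Rightarrow> real^'n^'n) \<Rightarrow> bool" where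
  "almost_contact_metric_on U phi eta xi g \<longleftrightarrow>
     riemannian_metric_on U g \<and> smooth_tf_on U phi \<and> smooth_vf_on U eta \<and> smooth_vf_on U xi \<and>
     (\<forall>p\<in>U. (\<forall>X. phi p *v (phi p *v X) = - X + (eta p \<bullet> X) *\<^sub>R xi p) \<and>
             eta p \<bullet> xi p = 1 \<and>
             (\<forall>X. eta p \<bullet> (phi p *v X) = 0) \<and>
             phi p *v xi p = 0 \<and>
             (\<forall>X Y. gm g p (phi p *v X) (phi p *v Y) = gm g p X Y - (eta p \<bullet> X) * (eta p \<bullet> Y)) \<and>
             (\<forall>X. eta p \<bullet> X = gm g p (xi p) X))"

definition kenmotsu_on ::
  "(real^'n::finite) set \<Rightarrow> (real^'n \<Rightarrow> real^'n^'n) \<Rightarrow> (real^'n \<Rightarrow> real^'n) \<Rightarrow> (real^'n \<Rightarrow> real^'n)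
   \<Rightarrow> (real^'n \<Rightarrow> real^'n^'n) \<Rightarrow> bool" where
  "kenmotsu_on U phi eta xi g \<longleftrightarrow>
     almost_contact_metric_on U phi eta xi g \<and>
     (\<forall>p\<in>U. \<forall>X Y. nabla g X (\<lambda>q. phi q *v Y) p - phi p *v nabla g X (\<lambda>_. Y) p
                 = gm g p (phi p *v X) Y *\<^sub>R xi p - (eta p \<bullet> Y) *\<^sub>R (phi p *v X))"

definition three_kenmotsu_on ::
  "(real^'n::finite) set \<Rightarrow> (nat \<Rightarrow> real^'n \<Rightarrow> real^'n^'n) \<Rightarrow> (real^'n \<Rightarrow> real^'n) \<Rightarrow> (real^'n \<Rightarrow> real^'n)
   \<Rightarrow> (real^'n \<Rightarrow> real^'n^'n) \<Rightarrow> bool" where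
  "three_kenmotsu_on U phi eta xi g \<longleftrightarrow>
     (\<forall>a\<in>{1,2,3}. kenmotsu_on U (phi a) eta xi g) \<and>
     (\<forall>p\<in>U. phi 3 p = phi 1 p ** phi 2 p \<and> phi 1 p = phi 2 p ** phi 3 p \<and>
             phi 2 p = phi 3 p ** phi 1 p)"

definition hol_sec_curv ::
  "(nat \<Rightarrow> real^'n::finite \<Rightarrow> real^'n^'n) \<Rightarrow> (real^'n \<Rightarrow> real^'n^'n) \<Rightarrow> nat \<Rightarrow> real^'n \<Rightarrow> real^'n \<Rightarrow> real" where
  "hol_sec_curv phi g a p X =
     - curv4 g p X (phi a p *v X) X (phi a p *v X) / (gm g p X X)^2"

end

theory Submission
  imports Defs
begin

definition hdv :: "'n::finite \<Rightarrow> (real^'n \<Rightarrow> 'b::real_normed_vector) \<Rightarrow> real^'n \<Rightarrow> 'b \<Rightarrow> bool" where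
  "hdv i F q d \<longleftrightarrow> ((\<lambda>t. F (q + t *\<^sub>R axis i 1)) has_vector_derivative d) (at 0)"

lemma hvd_vec:
  fixes f :: "real \<Rightarrow> 'a::euclidean_space^'n"
  shows "(f has_vector_derivative d) (at x) \<longleftrightarrow> (\<forall>k. ((\<lambda>t. f t $ k) has_vector_derivative d $ k) (at x))"
proof
  assume a: "(f has_vector_derivative d) (at x)"
  show "\<forall>k. ((\<lambda>t. f t $ k) has_vector_derivative d $ k) (at x)"
  proof
    fix k
    show "((\<lambda>t. f t $ k) has_vector_derivative d $ k) (at x)"
      by (rule bounded_linear.has_vector_derivative[OF bounded_linear_vec_nth a])
  qed
next
  assume a: "\<forall>k. ((\<lambda>t. f t $ k) has_vector_derivative d $ k) (at x)"
  show "(f has_vector_derivative d) (at x)"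
    unfolding has_vector_derivative_def
  proof (subst has_derivative_componentwise_within, intro ballI)
    fix b :: "'a^'n" assume "b \<in> Basis"
    then obtain k u where b: "b = axis k u" and u: "u \<in> Basis" by (auto simp: Basis_vec_def)
    have "((\<lambda>t. f t $ k) has_derivative (\<lambda>t. t *\<^sub>R d $ k)) (at x)"
      using a unfolding has_vector_derivative_def by blast
    then have "((\<lambda>t. f t $ k \<bullet> u) has_derivative (\<lambda>t. (t *\<^sub>R d $ k) \<bullet> u)) (at x)"
      using has_derivative_componentwise_within[THEN iffD1] u by blast
    then show "((\<lambda>t. f t \<bullet> b) has_derivative (\<lambda>t. (t *\<^sub>R d) \<bullet> b)) (at x)"
      unfolding b by (simp add: inner_axis)
  qed
qed

lemma hdv_vec: "hdv i (F :: real^'n \<Rightarrow> 'a::euclidean_space^'m) q d \<longleftrightarrow> (\<forall>k. hdv i (\<lambda>y. F y $ k) q (d $ k))"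
  unfolding hdv_def using hvd_vec[of "\<lambda>t. F (q + t *\<^sub>R axis i 1)" d 0] by simp

lemma hdv_mat: "hdv i (F :: real^'n \<Rightarrow> real^'m^'k) q d \<longleftrightarrow> (\<forall>k l. hdv i (\<lambda>y. F y $ k $ l) q (d $ k $ l))"
  by (simp add: hdv_vec[of i F] hdv_vec[of i "\<lambda>y. F y $ _"])

lemma hdv_pd: "hdv i f q d \<Longrightarrow> pd i f q = d"
  unfolding hdv_def pd_def
  by (simp add: DERIV_imp_deriv has_real_derivative_iff_has_vector_derivative)

lemma hdv_unique: "hdv i F q d \<Longrightarrow> hdv i F q d' \<Longrightarrow> d = d'"
  unfolding hdv_def by (rule vector_derivative_unique_at)

lemma hdv_const[simp]: "hdv i (\<lambda>y. c) q 0"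
  unfolding hdv_def by simp

lemma hdv_add: "hdv i F q d1 \<Longrightarrow> hdv i G q d2 \<Longrightarrow> hdv i (\<lambda>y. F y + G y) q (d1 + d2)"
  unfolding hdv_def by (rule has_vector_derivative_add)
lemma hdv_diff: "hdv i F q d1 \<Longrightarrow> hdv i G q d2 \<Longrightarrow> hdv i (\<lambda>y. F y - G y) q (d1 - d2)"
  unfolding hdv_def by (rule has_vector_derivative_diff)
lemma hdv_neg: "hdv i F q d1 \<Longrightarrow> hdv i (\<lambda>y. - F y) q (- d1)"
  unfolding hdv_def by (rule has_vector_derivative_minus)
lemma hdv_sum: "(\<And>j. j \<in> J \<Longrightarrow> hdv i (F j) q (d j)) \<Longrightarrow> hdv i (\<lambda>y. \<Sum>j\<in>J. F j y) q (\<Sum>j\<in>J. d j)"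
  unfolding hdv_def by (rule has_vector_derivative_sum)

lemma hdv_bil:
  assumes B: "bounded_bilinear B" and "hdv i F q d1" "hdv i G q d2"
  shows "hdv i (\<lambda>y. B (F y) (G y)) q (B (F q) d2 + B d1 (G q))"
  using bounded_bilinear.has_vector_derivative[OF B, of "\<lambda>t. F (q + t *\<^sub>R axis i 1)" d1 0 UNIV
     "\<lambda>t. G (q + t *\<^sub>R axis i 1)" d2] assms(2,3) unfolding hdv_def by simp

lemma bb_mv: "bounded_bilinear ((*v) :: real^'n^'m \<Rightarrow> real^'n \<Rightarrow> real^'m)"
  unfolding bilinear_conv_bounded_bilinear[symmetric] bilinear_def
  by (auto intro!: linearI simp: matrix_vector_right_distrib matrix_vector_mult_add_rdistrib
      matrix_vector_mult_scaleR scaleR_matrix_vector_assoc)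

lemma bb_mm: "bounded_bilinear ((**) :: real^'n^'m \<Rightarrow> real^'k^'n \<Rightarrow> real^'k^'m)"
  unfolding bilinear_conv_bounded_bilinear[symmetric] bilinear_def
  by (auto intro!: linearI simp: matrix_matrix_mult_def vec_eq_iff sum.distrib
      sum_distrib_left algebra_simps)

lemma hdv_mult: "hdv i f q d1 \<Longrightarrow> hdv i g q d2 \<Longrightarrow> hdv i (\<lambda>y. f y * g y :: real) q (f q * d2 + d1 * g q)"
  by (rule hdv_bil[OF bounded_bilinear_mult])
lemma hdv_scaleR: "hdv i f q d1 \<Longrightarrow> hdv i G q d2 \<Longrightarrow> hdv i (\<lambda>y. f y *\<^sub>R G y) q (f q *\<^sub>R d2 + d1 *\<^sub>R G q)"
  by (rule hdv_bil[OF bounded_bilinear_scaleR])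
lemma hdv_inner: "hdv i F q d1 \<Longrightarrow> hdv i G q d2 \<Longrightarrow> hdv i (\<lambda>y. F y \<bullet> G y) q (F q \<bullet> d2 + d1 \<bullet> G q)"
  by (rule hdv_bil[OF bounded_bilinear_inner])
lemma hdv_mv: "hdv i (F :: real^'n \<Rightarrow> real^'k^'m) q d1 \<Longrightarrow> hdv i G q d2 \<Longrightarrow> hdv i (\<lambda>y. F y *v G y) q (F q *v d2 + d1 *v G q)"
  by (rule hdv_bil[OF bb_mv])
lemma hdv_mm: "hdv i (F :: real^'n \<Rightarrow> real^'k^'m) q d1 \<Longrightarrow> hdv i G q d2 \<Longrightarrow> hdv i (\<lambda>y. F y ** G y) q (F q ** d2 + d1 ** G q)"
  by (rule hdv_bil[OF bb_mm])

lemma hdv_local: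
  assumes U: "open U" "q \<in> U" and eq: "\<And>y. y \<in> U \<Longrightarrow> F y = G y" and h: "hdv i F q d"
  shows "hdv i G q d"
  unfolding hdv_def
proof (rule has_vector_derivative_transform_within_open[OF h[unfolded hdv_def]])
  show "open {t::real. q + t *\<^sub>R axis i 1 \<in> U}"
    using continuous_open_vimage[OF U(1), of "\<lambda>t::real. q + t *\<^sub>R axis i 1"]
    by (auto simp: vimage_def intro!: continuous_intros)
  show "0 \<in> {t::real. q + t *\<^sub>R axis i 1 \<in> U}" using U by simp
  show "\<And>y. y \<in> {t. q + t *\<^sub>R axis i 1 \<in> U} \<Longrightarrow> F (q + y *\<^sub>R axis i 1) = G (q + y *\<^sub>R axis i 1)"
    using eq by simp
qed

lemma fold_pd1: "fold pd [j] f = pd j f" by simp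
lemma fold_pd2: "fold pd [j, i] f = pd i (pd j f)" by simp

lemma sm_hd: "smooth_fun_on U f \<Longrightarrow> q \<in> U \<Longrightarrow> hdv i f q (pd i f q)"
  unfolding smooth_fun_on_def hdv_def
  using has_real_derivative_iff_has_vector_derivative
  by (metis fold_Nil id_apply)

lemma sm_hd2: "smooth_fun_on U f \<Longrightarrow> q \<in> U \<Longrightarrow> hdv i (pd j f) q (pd i (pd j f) q)"
  unfolding smooth_fun_on_def hdv_def
  using has_real_derivative_iff_has_vector_derivative fold_pd1
  by metis

lemma sm_hd3: "smooth_fun_on U f \<Longrightarrow> q \<in> U \<Longrightarrow> hdv i (\<lambda>y. pd k (pd j f) y) q (pd i (pd k (pd j f)) q)"
  unfolding smooth_fun_on_def hdv_def
  using has_real_derivative_iff_has_vector_derivative fold_pd2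
  by metis


lemma line_deriv:
  fixes f :: "real^'n \<Rightarrow> real"
  assumes "hdv i f (c + s0 *\<^sub>R axis i 1) d"
  shows "((\<lambda>s. f (c + s *\<^sub>R axis i 1)) has_real_derivative d) (at s0)"
proof -
  have "((\<lambda>t. f (c + s0 *\<^sub>R axis i 1 + t *\<^sub>R axis i 1)) has_real_derivative d) (at 0)"
    using assms unfolding hdv_def has_real_derivative_iff_has_vector_derivative .
  moreover have "(\<lambda>t. f (c + s0 *\<^sub>R axis i 1 + t *\<^sub>R axis i 1)) = (\<lambda>t. f (c + (t + s0) *\<^sub>R axis i 1))"
    by (simp add: algebra_simps)
  ultimately show ?thesis using DERIV_shift[of "\<lambda>s. f (c + s *\<^sub>R axis i 1)" d 0 s0] by simp
qed

lemma sm_cont: "smooth_fun_on U f \<Longrightarrow> continuous_on U (fold pd is f)"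
  unfolding smooth_fun_on_def by blast

lemma schwarz:
  fixes f :: "real^'n \<Rightarrow> real"
  assumes sm: "smooth_fun_on U f" and U: "open U" "p \<in> U"
  shows "pd i (pd j f) p = pd j (pd i f) p"
proof (rule ccontr)
  define a :: "real^'n" where "a = axis i 1"
  define b :: "real^'n" where "b = axis j 1"
  define Fij where "Fij = pd i (pd j f)"
  define Fji where "Fji = pd j (pd i f)"
  assume ne: "pd i (pd j f) p \<noteq> pd j (pd i f) p"
  define \<epsilon> where "\<epsilon> = \<bar>Fij p - Fji p\<bar> / 2"
  have ep: "\<epsilon> > 0" using ne unfolding \<epsilon>_def Fij_def Fji_def by simp
  have "continuous_on U (fold pd [j,i] f)" using sm_cont[OF sm] .
  then have cij: "continuous_on U Fij" unfolding Fij_def by simp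
  have "continuous_on U (fold pd [i,j] f)" using sm_cont[OF sm] .
  then have cji: "continuous_on U Fji" unfolding Fji_def by simp
  have "\<exists>d>0. \<forall>y\<in>U. dist y p < d \<longrightarrow> dist (Fij y) (Fij p) < \<epsilon>"
    using cij U(2) ep unfolding continuous_on_iff by blast
  then obtain d1 where d1: "d1 > 0" "\<And>y. dist y p < d1 \<Longrightarrow> y \<in> U \<Longrightarrow> dist (Fij y) (Fij p) < \<epsilon>"
    by blast
  have "\<exists>d>0. \<forall>y\<in>U. dist y p < d \<longrightarrow> dist (Fji y) (Fji p) < \<epsilon>"
    using cji U(2) ep unfolding continuous_on_iff by blast
  then obtain d2 where d2: "d2 > 0" "\<And>y. dist y p < d2 \<Longrightarrow> y \<in> U \<Longrightarrow> dist (Fji y) (Fji p) < \<epsilon>"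
    by blast
  obtain d3 where d3: "d3 > 0" "ball p d3 \<subseteq> U"
    using U open_contains_ball by blast
  define h where "h = min d1 (min d2 d3) / 4"
  have h: "h > 0" "2 * h < d1" "2 * h < d2" "2 * h < d3"
    unfolding h_def using d1 d2 d3 by auto
  have inU: "p + s *\<^sub>R a + t *\<^sub>R b \<in> U" if "\<bar>s\<bar> \<le> h" "\<bar>t\<bar> \<le> h" for s t
  proof -
    have "norm (s *\<^sub>R a + t *\<^sub>R b) \<le> \<bar>s\<bar> + \<bar>t\<bar>"
      using norm_triangle_ineq[of "s *\<^sub>R a" "t *\<^sub>R b"] unfolding a_def b_def by simp
    then have "dist (p + s *\<^sub>R a + t *\<^sub>R b) p < d3"
      using that h by (simp add: dist_norm add.assoc)
    then show ?thesis using d3 by (auto simp: dist_commute)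
  qed
  have close: "dist (p + s *\<^sub>R a + t *\<^sub>R b) p < 2 * h" if "\<bar>s\<bar> < h" "\<bar>t\<bar> < h" for s t
  proof -
    have "norm (s *\<^sub>R a + t *\<^sub>R b) \<le> \<bar>s\<bar> + \<bar>t\<bar>"
      using norm_triangle_ineq[of "s *\<^sub>R a" "t *\<^sub>R b"] unfolding a_def b_def by simp
    then show ?thesis
      using that h by (simp add: dist_norm add.assoc)
  qed
  define \<Delta> where "\<Delta> = f (p + h *\<^sub>R a + h *\<^sub>R b) - f (p + h *\<^sub>R a) - f (p + h *\<^sub>R b) + f p"
  have D1: "\<exists>\<sigma> \<tau>. 0 < \<sigma> \<and> \<sigma> < h \<and> 0 < \<tau> \<and> \<tau> < h \<and> \<Delta> = h * h * Fji (p + \<sigma> *\<^sub>R a + \<tau> *\<^sub>R b)"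
  proof -
    have "\<exists>\<sigma>. 0 < \<sigma> \<and> \<sigma> < h \<and>
      (f (p + h *\<^sub>R b + h *\<^sub>R a) - f (p + h *\<^sub>R a)) - (f (p + h *\<^sub>R b + 0 *\<^sub>R a) - f (p + 0 *\<^sub>R a))
      = (h - 0) * (pd i f (p + h *\<^sub>R b + \<sigma> *\<^sub>R a) - pd i f (p + \<sigma> *\<^sub>R a))"
    proof (rule MVT2[OF h(1)])
      fix s :: real assume s: "0 \<le> s" "s \<le> h"
      have q1: "p + h *\<^sub>R b + s *\<^sub>R a \<in> U" using inU[of s h] s h by (simp add: algebra_simps)
      have q2: "p + s *\<^sub>R a \<in> U" using inU[of s 0] s h by simp
      show "((\<lambda>s. f (p + h *\<^sub>R b + s *\<^sub>R a) - f (p + s *\<^sub>R a)) has_real_derivative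
             pd i f (p + h *\<^sub>R b + s *\<^sub>R a) - pd i f (p + s *\<^sub>R a)) (at s)"
        unfolding a_def
        by (intro DERIV_diff line_deriv sm_hd[OF sm]) (use q1 q2 a_def in auto)
    qed
    then obtain \<sigma> where \<sigma>: "0 < \<sigma>" "\<sigma> < h" and
      e1: "\<Delta> = h * (pd i f (p + \<sigma> *\<^sub>R a + h *\<^sub>R b) - pd i f (p + \<sigma> *\<^sub>R a + 0 *\<^sub>R b))"
      unfolding \<Delta>_def by (auto simp: algebra_simps)
    have "\<exists>\<tau>. 0 < \<tau> \<and> \<tau> < h \<and>
      pd i f (p + \<sigma> *\<^sub>R a + h *\<^sub>R b) - pd i f (p + \<sigma> *\<^sub>R a + 0 *\<^sub>R b)
      = (h - 0) * Fji (p + \<sigma> *\<^sub>R a + \<tau> *\<^sub>R b)"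
    proof (rule MVT2[OF h(1)])
      fix t :: real assume t: "0 \<le> t" "t \<le> h"
      have q1: "p + \<sigma> *\<^sub>R a + t *\<^sub>R b \<in> U" using inU[of \<sigma> t] t \<sigma> by simp
      show "((\<lambda>t. pd i f (p + \<sigma> *\<^sub>R a + t *\<^sub>R b)) has_real_derivative Fji (p + \<sigma> *\<^sub>R a + t *\<^sub>R b)) (at t)"
        unfolding b_def Fji_def
        by (intro line_deriv sm_hd2[OF sm]) (use q1 b_def in auto)
    qed
    then obtain \<tau> where "0 < \<tau>" "\<tau> < h" "pd i f (p + \<sigma> *\<^sub>R a + h *\<^sub>R b) - pd i f (p + \<sigma> *\<^sub>R a + 0 *\<^sub>R b)
      = h * Fji (p + \<sigma> *\<^sub>R a + \<tau> *\<^sub>R b)" by auto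
    then show ?thesis using \<sigma> e1 by (intro exI[of _ \<sigma>] exI[of _ \<tau>]) auto
  qed
  have D2: "\<exists>\<sigma> \<tau>. 0 < \<sigma> \<and> \<sigma> < h \<and> 0 < \<tau> \<and> \<tau> < h \<and> \<Delta> = h * h * Fij (p + \<sigma> *\<^sub>R a + \<tau> *\<^sub>R b)"
  proof -
    have "\<exists>\<tau>. 0 < \<tau> \<and> \<tau> < h \<and>
      (f (p + h *\<^sub>R a + h *\<^sub>R b) - f (p + h *\<^sub>R b)) - (f (p + h *\<^sub>R a + 0 *\<^sub>R b) - f (p + 0 *\<^sub>R b))
      = (h - 0) * (pd j f (p + h *\<^sub>R a + \<tau> *\<^sub>R b) - pd j f (p + \<tau> *\<^sub>R b))"
    proof (rule MVT2[OF h(1)])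
      fix t :: real assume t: "0 \<le> t" "t \<le> h"
      have q1: "p + h *\<^sub>R a + t *\<^sub>R b \<in> U" using inU[of h t] t h by (simp add: algebra_simps)
      have q2: "p + t *\<^sub>R b \<in> U" using inU[of 0 t] t h by simp
      show "((\<lambda>t. f (p + h *\<^sub>R a + t *\<^sub>R b) - f (p + t *\<^sub>R b)) has_real_derivative
             pd j f (p + h *\<^sub>R a + t *\<^sub>R b) - pd j f (p + t *\<^sub>R b)) (at t)"
        unfolding b_def
        by (intro DERIV_diff line_deriv sm_hd[OF sm]) (use q1 q2 b_def in auto)
    qed
    then obtain \<tau> where \<tau>: "0 < \<tau>" "\<tau> < h" and
      e1: "\<Delta> = h * (pd j f (p + \<tau> *\<^sub>R b + h *\<^sub>R a) - pd j f (p + \<tau> *\<^sub>R b + 0 *\<^sub>R a))"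
      unfolding \<Delta>_def by (auto simp: algebra_simps)
    have "\<exists>\<sigma>. 0 < \<sigma> \<and> \<sigma> < h \<and>
      pd j f (p + \<tau> *\<^sub>R b + h *\<^sub>R a) - pd j f (p + \<tau> *\<^sub>R b + 0 *\<^sub>R a)
      = (h - 0) * Fij (p + \<tau> *\<^sub>R b + \<sigma> *\<^sub>R a)"
    proof (rule MVT2[OF h(1)])
      fix s :: real assume s: "0 \<le> s" "s \<le> h"
      have q1: "p + \<tau> *\<^sub>R b + s *\<^sub>R a \<in> U" using inU[of s \<tau>] s \<tau> by (simp add: algebra_simps)
      show "((\<lambda>s. pd j f (p + \<tau> *\<^sub>R b + s *\<^sub>R a)) has_real_derivative Fij (p + \<tau> *\<^sub>R b + s *\<^sub>R a)) (at s)"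
        unfolding a_def Fij_def
        by (intro line_deriv sm_hd2[OF sm]) (use q1 a_def in auto)
    qed
    then obtain \<sigma> where "0 < \<sigma>" "\<sigma> < h" "pd j f (p + \<tau> *\<^sub>R b + h *\<^sub>R a) - pd j f (p + \<tau> *\<^sub>R b + 0 *\<^sub>R a)
      = h * Fij (p + \<tau> *\<^sub>R b + \<sigma> *\<^sub>R a)" by auto
    then show ?thesis using \<tau> e1 by (intro exI[of _ \<sigma>] exI[of _ \<tau>]) (auto simp: algebra_simps)
  qed
  obtain s1 t1 where st1: "0 < s1" "s1 < h" "0 < t1" "t1 < h" "\<Delta> = h * h * Fji (p + s1 *\<^sub>R a + t1 *\<^sub>R b)"
    using D1 by blast
  obtain s2 t2 where st2: "0 < s2" "s2 < h" "0 < t2" "t2 < h" "\<Delta> = h * h * Fij (p + s2 *\<^sub>R a + t2 *\<^sub>R b)"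
    using D2 by blast
  have eq: "Fji (p + s1 *\<^sub>R a + t1 *\<^sub>R b) = Fij (p + s2 *\<^sub>R a + t2 *\<^sub>R b)"
    using st1(5) st2(5) h(1) by (metis mult_cancel_left mult_eq_0_iff less_irrefl)
  have "\<bar>s1\<bar> < h" "\<bar>t1\<bar> < h" "\<bar>s2\<bar> < h" "\<bar>t2\<bar> < h" using st1 st2 by auto
  then have "dist (Fji (p + s1 *\<^sub>R a + t1 *\<^sub>R b)) (Fji p) < \<epsilon>"
       "dist (Fij (p + s2 *\<^sub>R a + t2 *\<^sub>R b)) (Fij p) < \<epsilon>"
    using d2(2)[OF _ inU[of s1 t1]] close[of s1 t1] d1(2)[OF _ inU[of s2 t2]] close[of s2 t2] h
    by (simp_all add: less_imp_le)
  moreover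
  define y1 where "y1 = p + s1 *\<^sub>R a + t1 *\<^sub>R b"
  define y2 where "y2 = p + s2 *\<^sub>R a + t2 *\<^sub>R b"
  have e2: "Fij p - Fij y2 - (Fji p - Fji y1) = Fij p - Fji p"
    using eq unfolding y1_def y2_def by linarith
  have "\<bar>Fij p - Fij y2 - (Fji p - Fji y1)\<bar> \<le> \<bar>Fij p - Fij y2\<bar> + \<bar>Fji p - Fji y1\<bar>"
    by (rule abs_triangle_ineq4)
  then have "\<bar>Fij p - Fji p\<bar> \<le> \<bar>Fij y2 - Fij p\<bar> + \<bar>Fji y1 - Fji p\<bar>"
    unfolding e2 abs_minus_commute[of "Fij p" "Fij y2"] abs_minus_commute[of "Fji p" "Fji y1"] .
  then have "\<bar>Fij p - Fji p\<bar> \<le> \<bar>Fij (p + s2 *\<^sub>R a + t2 *\<^sub>R b) - Fij p\<bar> + \<bar>Fji (p + s1 *\<^sub>R a + t1 *\<^sub>R b) - Fji p\<bar>"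
    unfolding y1_def y2_def .
  ultimately show False unfolding \<epsilon>_def dist_real_def by argo
qed


definition DF :: "(real^'n::finite \<Rightarrow> 'b::real_normed_vector) \<Rightarrow> real^'n \<Rightarrow> bool" where
  "DF F p \<longleftrightarrow> (\<forall>i. \<exists>d. hdv i F p d)"

definition pdv :: "'n::finite \<Rightarrow> (real^'n \<Rightarrow> 'b::real_normed_vector) \<Rightarrow> real^'n \<Rightarrow> 'b" where
  "pdv i F p = vector_derivative (\<lambda>t. F (p + t *\<^sub>R axis i 1)) (at 0)"

definition dv :: "real^'n::finite \<Rightarrow> (real^'n \<Rightarrow> 'b::real_normed_vector) \<Rightarrow> real^'n \<Rightarrow> 'b" where
  "dv X F p = (\<Sum>i\<in>UNIV. X$i *\<^sub>R pdv i F p)"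

lemma hdv_pdv: "hdv i F p d \<Longrightarrow> pdv i F p = d"
  unfolding hdv_def pdv_def by (rule vector_derivative_at)

lemma DF_hdv: "DF F p \<Longrightarrow> hdv i F p (pdv i F p)"
proof -
  assume "DF F p"
  then obtain d where d: "hdv i F p d" unfolding DF_def by blast
  then show ?thesis using hdv_pdv[OF d] by simp
qed

lemma DF_I: "(\<And>i. hdv i F p (D i)) \<Longrightarrow> DF F p"
  unfolding DF_def by blast

lemma DF_dv: "(\<And>i. hdv i F p (D i)) \<Longrightarrow> dv X F p = (\<Sum>i\<in>UNIV. X$i *\<^sub>R D i)"
proof -
  assume a: "\<And>i. hdv i F p (D i)"
  show ?thesis unfolding dv_def by (simp add: hdv_pdv[OF a])
qed

lemma DF_const[simp]: "DF (\<lambda>q. c) p"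
  by (rule DF_I[OF hdv_const])
lemma dv_const[simp]: "dv X (\<lambda>q. c) p = 0"
  by (subst DF_dv[OF hdv_const]) simp

lemma DF_add[simp]: "DF F p \<Longrightarrow> DF G p \<Longrightarrow> DF (\<lambda>q. F q + G q) p"
  by (rule DF_I[OF hdv_add[OF DF_hdv DF_hdv]])
lemma dv_add[simp]: "DF F p \<Longrightarrow> DF G p \<Longrightarrow> dv X (\<lambda>q. F q + G q) p = dv X F p + dv X G p"
  by (subst DF_dv[OF hdv_add[OF DF_hdv DF_hdv]]) (auto simp: dv_def scaleR_right_distrib sum.distrib)

lemma DF_diff[simp]: "DF F p \<Longrightarrow> DF G p \<Longrightarrow> DF (\<lambda>q. F q - G q) p"
  by (rule DF_I[OF hdv_diff[OF DF_hdv DF_hdv]])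
lemma dv_diff[simp]: "DF F p \<Longrightarrow> DF G p \<Longrightarrow> dv X (\<lambda>q. F q - G q) p = dv X F p - dv X G p"
  by (subst DF_dv[OF hdv_diff[OF DF_hdv DF_hdv]]) (auto simp: dv_def scaleR_diff_right sum_subtractf)

lemma DF_neg[simp]: "DF F p \<Longrightarrow> DF (\<lambda>q. - F q) p"
  by (rule DF_I[OF hdv_neg[OF DF_hdv]])
lemma dv_neg[simp]: "DF F p \<Longrightarrow> dv X (\<lambda>q. - F q) p = - dv X F p"
  by (subst DF_dv[OF hdv_neg[OF DF_hdv]]) (auto simp: dv_def sum_negf)

lemma DF_sum[simp]: "(\<And>j. j \<in> J \<Longrightarrow> DF (F j) p) \<Longrightarrow> DF (\<lambda>q. \<Sum>j\<in>J. F j q) p"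
  by (rule DF_I[OF hdv_sum[OF DF_hdv]])
lemma dv_sum[simp]: "(\<And>j. j \<in> J \<Longrightarrow> DF (F j) p) \<Longrightarrow> dv X (\<lambda>q. \<Sum>j\<in>J. F j q) p = (\<Sum>j\<in>J. dv X (F j) p)"
  by (subst DF_dv[OF hdv_sum[OF DF_hdv]]) (simp_all add: dv_def scaleR_sum_right sum.swap[of _ J])

lemma DF_bil: "bounded_bilinear B \<Longrightarrow> DF F p \<Longrightarrow> DF G p \<Longrightarrow> DF (\<lambda>q. B (F q) (G q)) p"
  by (rule DF_I[OF hdv_bil[OF _ DF_hdv DF_hdv]])
lemma dv_bil: 
  assumes B: "bounded_bilinear B" and F: "DF F p" and G: "DF G p"
  shows "dv X (\<lambda>q. B (F q) (G q)) p = B (F p) (dv X G p) + B (dv X F p) (G p)"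
proof -
  have "dv X (\<lambda>q. B (F q) (G q)) p = (\<Sum>i\<in>UNIV. X$i *\<^sub>R (B (F p) (pdv i G p) + B (pdv i F p) (G p)))"
    by (rule DF_dv[OF hdv_bil[OF B DF_hdv[OF F] DF_hdv[OF G]]])
  also have "\<dots> = B (F p) (dv X G p) + B (dv X F p) (G p)"
    unfolding dv_def
    by (simp add: scaleR_right_distrib sum.distrib bounded_bilinear.sum_left[OF B]
        bounded_bilinear.sum_right[OF B] bounded_bilinear.scaleR_left[OF B] bounded_bilinear.scaleR_right[OF B])
  finally show ?thesis .
qed

lemma DF_mult[simp]: "DF f p \<Longrightarrow> DF g p \<Longrightarrow> DF (\<lambda>q. f q * g q :: real) p"
  by (rule DF_bil[OF bounded_bilinear_mult])
lemma dv_mult[simp]: "DF f p \<Longrightarrow> DF g p \<Longrightarrow> dv X (\<lambda>q. f q * g q :: real) p = f p * dv X g p + dv X f p * g p"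
  by (rule dv_bil[OF bounded_bilinear_mult])
lemma DF_scaleR[simp]: "DF f p \<Longrightarrow> DF G p \<Longrightarrow> DF (\<lambda>q. f q *\<^sub>R G q) p"
  by (rule DF_bil[OF bounded_bilinear_scaleR])
lemma dv_scaleR[simp]: "DF f p \<Longrightarrow> DF G p \<Longrightarrow> dv X (\<lambda>q. f q *\<^sub>R G q) p = f p *\<^sub>R dv X G p + dv X f p *\<^sub>R G p"
  by (rule dv_bil[OF bounded_bilinear_scaleR])
lemma DF_inner[simp]: "DF F p \<Longrightarrow> DF G p \<Longrightarrow> DF (\<lambda>q. F q \<bullet> G q) p"
  by (rule DF_bil[OF bounded_bilinear_inner])
lemma dv_inner[simp]: "DF F p \<Longrightarrow> DF G p \<Longrightarrow> dv X (\<lambda>q. F q \<bullet> G q) p = F p \<bullet> dv X G p + dv X F p \<bullet> G p"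
  by (rule dv_bil[OF bounded_bilinear_inner])
lemma DF_mv[simp]: "DF (F :: real^'n \<Rightarrow> real^'k^'m) p \<Longrightarrow> DF G p \<Longrightarrow> DF (\<lambda>q. F q *v G q) p"
  by (rule DF_bil[OF bb_mv])
lemma dv_mv[simp]: "DF (F :: real^'n \<Rightarrow> real^'k^'m) p \<Longrightarrow> DF G p \<Longrightarrow> dv X (\<lambda>q. F q *v G q) p = F p *v dv X G p + dv X F p *v G p"
  by (rule dv_bil[OF bb_mv])
lemma DF_mm[simp]: "DF (F :: real^'n \<Rightarrow> real^'k^'m) p \<Longrightarrow> DF G p \<Longrightarrow> DF (\<lambda>q. F q ** G q) p"
  by (rule DF_bil[OF bb_mm])
lemma dv_mm[simp]: "DF (F :: real^'n \<Rightarrow> real^'k^'m) p \<Longrightarrow> DF G p \<Longrightarrow> dv X (\<lambda>q. F q ** G q) p = F p ** dv X G p + dv X F p ** G p"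
  by (rule dv_bil[OF bb_mm])

lemma DF_nth[simp]: "DF (F :: real^'n \<Rightarrow> 'a::euclidean_space^'m) p \<Longrightarrow> DF (\<lambda>q. F q $ k) p"
  unfolding DF_def using hdv_vec by blast
lemma pdv_nth: "DF (F :: real^'n \<Rightarrow> 'a::euclidean_space^'m) p \<Longrightarrow> pdv i (\<lambda>q. F q $ k) p = pdv i F p $ k"
  by (rule hdv_pdv) (use DF_hdv hdv_vec in blast)
lemma dv_nth[simp]: "DF (F :: real^'n \<Rightarrow> 'a::euclidean_space^'m) p \<Longrightarrow> dv X (\<lambda>q. F q $ k) p = dv X F p $ k"
  unfolding dv_def by (simp add: pdv_nth)

lemma DF_vec[simp]: "(\<And>k. DF (f k) p) \<Longrightarrow> DF (\<lambda>q. (\<chi> k. f k q) :: 'a::euclidean_space^'m) p"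
proof -
  assume a: "\<And>k. DF (f k) p"
  show ?thesis
    by (rule DF_I[of _ _ "\<lambda>i. \<chi> k. pdv i (f k) p"]) (simp add: hdv_vec DF_hdv[OF a])
qed
lemma dv_vec[simp]: "(\<And>k. DF (f k) p) \<Longrightarrow> dv X (\<lambda>q. (\<chi> k. f k q) :: 'a::euclidean_space^'m) p = (\<chi> k. dv X (f k) p)"
proof -
  assume a: "\<And>k. DF (f k) p"
  have "dv X (\<lambda>q. (\<chi> k. f k q) :: 'a::euclidean_space^'m) p = (\<Sum>i\<in>UNIV. X$i *\<^sub>R (\<chi> k. pdv i (f k) p))"
    by (rule DF_dv) (simp add: hdv_vec DF_hdv[OF a])
  also have "\<dots> = (\<chi> k. dv X (f k) p)"
    unfolding dv_def by (simp add: vec_eq_iff sum_component)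
  finally show ?thesis .
qed

lemma DF_local: "open U \<Longrightarrow> p \<in> U \<Longrightarrow> (\<And>q. q \<in> U \<Longrightarrow> F q = G q) \<Longrightarrow> DF F p \<Longrightarrow> DF G p"
  unfolding DF_def using hdv_local by blast
lemma pdv_local: "open U \<Longrightarrow> p \<in> U \<Longrightarrow> (\<And>q. q \<in> U \<Longrightarrow> F q = G q) \<Longrightarrow> DF F p \<Longrightarrow> pdv i F p = pdv i G p"
proof -
  assume a: "open U" "p \<in> U" "\<And>q. q \<in> U \<Longrightarrow> F q = G q" "DF F p"
  have "hdv i G p (pdv i F p)" by (rule hdv_local[OF a(1,2) a(3) DF_hdv[OF a(4)]])
  then show ?thesis by (rule hdv_pdv[symmetric])
qed
lemma dv_local: "open U \<Longrightarrow> p \<in> U \<Longrightarrow> (\<And>q. q \<in> U \<Longrightarrow> F q = G q) \<Longrightarrow> DF F p \<Longrightarrow> dv X F p = dv X G p"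
proof -
  assume a: "open U" "p \<in> U" "\<And>q. q \<in> U \<Longrightarrow> F q = G q" "DF F p"
  show ?thesis unfolding dv_def by (simp add: pdv_local[OF a])
qed

lemma dv_lin_X: "dv (a *\<^sub>R X + b *\<^sub>R Y) F p = a *\<^sub>R dv X F p + b *\<^sub>R dv Y F p"
  unfolding dv_def by (simp add: algebra_simps sum.distrib scaleR_sum_right)

lemma pd_pdv: "DF (f :: real^'n \<Rightarrow> real) p \<Longrightarrow> pd i f p = pdv i f p"
  by (rule hdv_pd[OF DF_hdv])

lemma dd_dv: "DF (Y :: real^'n \<Rightarrow> real^'n) p \<Longrightarrow> dd v Y p = dv v Y p"
  unfolding dd_def dv_def by (simp add: vec_eq_iff sum_component pd_pdv pdv_nth)

lemma dd_const[simp]: "dd v (\<lambda>q. c) p = 0"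
  unfolding dd_def pd_def by (simp add: vec_eq_iff)


lemma diff_prod:
  fixes f :: "'i \<Rightarrow> real \<Rightarrow> real"
  assumes "finite I" "\<And>i. i \<in> I \<Longrightarrow> f i differentiable (at x)"
  shows "(\<lambda>t. \<Prod>i\<in>I. f i t) differentiable (at x)"
  using assms
proof (induction I rule: finite_induct)
  case empty then show ?case by simp
next
  case (insert a I)
  then show ?case by (simp add: prod.insert)
qed

lemma det_diff:
  fixes A :: "real \<Rightarrow> real^'n^'n"
  assumes "\<And>r c. (\<lambda>t. A t $ r $ c) differentiable (at x)"
  shows "(\<lambda>t. det (A t)) differentiable (at x)"
  unfolding det_def
  by (intro differentiable_sum ballI differentiable_mult differentiable_const diff_prod assms)
     (simp_all add: finite_permutations)

lemma minv:
  fixes M :: "real^'n^'n"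
  assumes "invertible M"
  shows "M ** matrix_inv M = mat 1" "matrix_inv M ** M = mat 1"
proof -
  have "\<exists>A'. M ** A' = mat 1 \<and> A' ** M = mat 1" using assms unfolding invertible_def .
  then have "M ** matrix_inv M = mat 1 \<and> matrix_inv M ** M = mat 1"
    unfolding matrix_inv_def by (rule someI_ex)
  then show "M ** matrix_inv M = mat 1" "matrix_inv M ** M = mat 1" by auto
qed

lemma cramer_entry:
  fixes M :: "real^'n^'n"
  assumes "invertible M"
  shows "matrix_inv M $ k $ l = det (\<chi> r c. if c = k then axis l 1 $ r else M $ r $ c) / det M"
proof -
  have d: "det M \<noteq> 0" using assms invertible_det_nz by blast
  have "M *v (matrix_inv M *v axis l 1) = axis l 1"
    by (simp add: matrix_vector_mul_assoc minv[OF assms])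
  then have "matrix_inv M *v axis l 1 = (\<chi> k. det(\<chi> i j. if j=k then axis l 1 $ i else M$i$j) / det M)"
    using cramer[OF d] by blast
  then have "(matrix_inv M *v axis l 1) $ k = det(\<chi> i j. if j=k then axis l 1 $ i else M$i$j) / det M"
    by simp
  moreover have "(matrix_inv M *v axis l 1) $ k = matrix_inv M $ k $ l"
    by (simp add: matrix_vector_mult_basis column_def)
  ultimately show ?thesis by simp
qed

lemma inv_diff:
  fixes M :: "real \<Rightarrow> real^'n^'n"
  assumes dM: "\<And>r c. (\<lambda>t. M t $ r $ c) differentiable (at 0)"
    and S: "open S" "0 \<in> S" and inv: "\<And>t. t \<in> S \<Longrightarrow> invertible (M t)"
  shows "\<exists>D. ((\<lambda>t. matrix_inv (M t) $ k $ l) has_real_derivative D) (at 0)"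
proof -
  have "(\<lambda>t. det (\<chi> r c. if c = k then axis l 1 $ r else M t $ r $ c) / det (M t)) differentiable (at 0)"
  proof (intro differentiable_divide det_diff)
    show "(\<lambda>t. (\<chi> r c. if c = k then axis l 1 $ r else M t $ r $ c) $ r $ c) differentiable at 0" for r c
      using dM by (cases "c = k") simp_all
    show "(\<lambda>t. M t $ r $ c) differentiable at 0" for r c by (rule dM)
    show "det (M 0) \<noteq> 0" using inv[OF S(2)] invertible_det_nz by blast
  qed
  then obtain D where D: "((\<lambda>t. det (\<chi> r c. if c = k then axis l 1 $ r else M t $ r $ c) / det (M t)) has_real_derivative D) (at 0)"
    unfolding real_differentiable_def by blast
  have "((\<lambda>t. matrix_inv (M t) $ k $ l) has_real_derivative D) (at 0)"
    by (rule has_field_derivative_transform_within_open[OF D S]) (simp add: cramer_entry[OF inv])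
  then show ?thesis by blast
qed

lemma DF_minv:
  fixes g :: "real^'n \<Rightarrow> real^'n^'n"
  assumes dg: "DF g p" and U: "open U" "p \<in> U" and inv: "\<And>q. q \<in> U \<Longrightarrow> invertible (g q)"
  shows "DF (\<lambda>q. matrix_inv (g q)) p"
  unfolding DF_def
proof
  fix i
  define M where "M t = g (p + t *\<^sub>R axis i 1)" for t
  have hM: "((\<lambda>t. M t) has_vector_derivative pdv i g p) (at 0)"
    using DF_hdv[OF dg, of i] unfolding hdv_def M_def .
  have dM: "(\<lambda>t. M t $ r $ c) differentiable (at 0)" for r c
  proof -
    have "((\<lambda>t. M t $ r) has_vector_derivative pdv i g p $ r) (at 0)"
      using hM unfolding hvd_vec[of M] by blast
    then have "((\<lambda>t. M t $ r $ c) has_vector_derivative pdv i g p $ r $ c) (at 0)"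
      unfolding hvd_vec[of "\<lambda>t. M t $ r"] by blast
    then show ?thesis by (rule differentiableI_vector)
  qed
  have S: "open {t::real. p + t *\<^sub>R axis i 1 \<in> U}"
    using continuous_open_vimage[OF U(1), of "\<lambda>t::real. p + t *\<^sub>R axis i 1"]
    by (auto simp: vimage_def intro!: continuous_intros)
  have "\<forall>k l. \<exists>D. ((\<lambda>t. matrix_inv (M t) $ k $ l) has_real_derivative D) (at 0)"
    using inv_diff[OF dM S] U(2) inv unfolding M_def by auto
  then obtain D where D: "\<And>k l. ((\<lambda>t. matrix_inv (M t) $ k $ l) has_real_derivative D k l) (at 0)"
    by metis
  have "hdv i (\<lambda>q. matrix_inv (g q)) p (\<chi> k l. D k l)"
    unfolding hdv_mat[of i "\<lambda>q. matrix_inv (g q)"]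
    using D unfolding hdv_def M_def has_real_derivative_iff_has_vector_derivative by simp
  then show "\<exists>d. hdv i (\<lambda>q. matrix_inv (g q)) p d" by blast
qed


lemma swap3: "(\<Sum>l\<in>L. \<Sum>i\<in>I. \<Sum>j\<in>J. f i j l) = (\<Sum>i\<in>I. \<Sum>j\<in>J. \<Sum>l\<in>L. f i j l)"
proof -
  have "(\<Sum>l\<in>L. \<Sum>i\<in>I. \<Sum>j\<in>J. f i j l) = (\<Sum>i\<in>I. \<Sum>l\<in>L. \<Sum>j\<in>J. f i j l)"
    by (rule sum.swap)
  also have "\<dots> = (\<Sum>i\<in>I. \<Sum>j\<in>J. \<Sum>l\<in>L. f i j l)"
    by (rule sum.cong[OF refl], rule sum.swap)
  finally show ?thesis .
qed

lemma compat_sum: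
  fixes v A B :: "'n::finite \<Rightarrow> real" and c :: "'n \<Rightarrow> 'n \<Rightarrow> 'n \<Rightarrow> real"
  assumes cs: "\<And>i j l. c i j l = c i l j"
  shows "(\<Sum>l\<in>UNIV. ((1/2) * (\<Sum>i\<in>UNIV. \<Sum>j\<in>UNIV. v i * A j * (c i j l + c j i l - c l i j))) * B l)
       + (\<Sum>l\<in>UNIV. A l * ((1/2) * (\<Sum>i\<in>UNIV. \<Sum>j\<in>UNIV. v i * B j * (c i j l + c j i l - c l i j))))
       = (\<Sum>k\<in>UNIV. A k * (\<Sum>l\<in>UNIV. (\<Sum>i\<in>UNIV. v i * c i k l) * B l))"
proof -
  define X where "X i j l = c i j l + c j i l - c l i j" for i j l
  have e1: "(\<Sum>l\<in>UNIV. ((1/2) * (\<Sum>i\<in>UNIV. \<Sum>j\<in>UNIV. v i * A j * X i j l)) * B l)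
      = (1/2) * (\<Sum>i\<in>UNIV. \<Sum>j\<in>UNIV. \<Sum>l\<in>UNIV. v i * A j * B l * X i j l)"
  proof -
    have "(\<Sum>l\<in>UNIV. ((1/2) * (\<Sum>i\<in>UNIV. \<Sum>j\<in>UNIV. v i * A j * X i j l)) * B l)
        = (1/2) * (\<Sum>l\<in>UNIV. \<Sum>i\<in>UNIV. \<Sum>j\<in>UNIV. v i * A j * B l * X i j l)"
      by (simp add: sum_distrib_left sum_distrib_right algebra_simps)
    also have "\<dots> = (1/2) * (\<Sum>i\<in>UNIV. \<Sum>j\<in>UNIV. \<Sum>l\<in>UNIV. v i * A j * B l * X i j l)"
      by (rule arg_cong[where f="\<lambda>x. (1/2::real) * x"]) (rule swap3)
    finally show ?thesis .
  qed
  have e2: "(\<Sum>l\<in>UNIV. A l * ((1/2) * (\<Sum>i\<in>UNIV. \<Sum>j\<in>UNIV. v i * B j * X i j l)))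
      = (1/2) * (\<Sum>i\<in>UNIV. \<Sum>j\<in>UNIV. \<Sum>l\<in>UNIV. v i * A j * B l * X i l j)"
  proof -
    have "(\<Sum>l\<in>UNIV. A l * ((1/2) * (\<Sum>i\<in>UNIV. \<Sum>j\<in>UNIV. v i * B j * X i j l)))
        = (1/2) * (\<Sum>l\<in>UNIV. \<Sum>i\<in>UNIV. \<Sum>j\<in>UNIV. v i * A l * B j * X i j l)"
      by (simp add: sum_distrib_left sum_distrib_right algebra_simps)
    also have "\<dots> = (1/2) * (\<Sum>i\<in>UNIV. \<Sum>l\<in>UNIV. \<Sum>j\<in>UNIV. v i * A l * B j * X i j l)"
      by (rule arg_cong[where f="\<lambda>x. (1/2::real) * x"]) (rule sum.swap)
    finally show ?thesis by simp
  qed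
  have e3: "(\<Sum>k\<in>UNIV. A k * (\<Sum>l\<in>UNIV. (\<Sum>i\<in>UNIV. v i * c i k l) * B l))
      = (\<Sum>i\<in>UNIV. \<Sum>j\<in>UNIV. \<Sum>l\<in>UNIV. v i * A j * B l * c i j l)"
  proof -
    have "(\<Sum>k\<in>UNIV. A k * (\<Sum>l\<in>UNIV. (\<Sum>i\<in>UNIV. v i * c i k l) * B l))
      = (\<Sum>k\<in>UNIV. \<Sum>l\<in>UNIV. \<Sum>i\<in>UNIV. v i * A k * B l * c i k l)"
      by (simp add: sum_distrib_left sum_distrib_right algebra_simps)
    also have "\<dots> = (\<Sum>i\<in>UNIV. \<Sum>k\<in>UNIV. \<Sum>l\<in>UNIV. v i * A k * B l * c i k l)"
      by (rule swap3[symmetric])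
    finally show ?thesis .
  qed
  have "(1/2) * (\<Sum>i\<in>UNIV. \<Sum>j\<in>UNIV. \<Sum>l\<in>UNIV. v i * A j * B l * X i j l)
      + (1/2) * (\<Sum>i\<in>UNIV. \<Sum>j\<in>UNIV. \<Sum>l\<in>UNIV. v i * A j * B l * X i l j)
      = (\<Sum>i\<in>UNIV. \<Sum>j\<in>UNIV. \<Sum>l\<in>UNIV. v i * A j * B l * c i j l)"
  proof -
    have "\<And>i j l. (1/2) * (v i * A j * B l * X i j l) + (1/2) * (v i * A j * B l * X i l j)
        = v i * A j * B l * c i j l"
      unfolding X_def using cs by (simp add: algebra_simps)
    then show ?thesis
      by (simp add: sum_distrib_left sum.distrib[symmetric])
  qed
  then show ?thesis using e1 e2 e3 unfolding X_def by simp
qed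


definition LL :: "(real^'n::finite \<Rightarrow> real^'n^'n) \<Rightarrow> real^'n \<Rightarrow> real^'n \<Rightarrow> real^'n \<Rightarrow> real^'n" where
  "LL g q v w = (\<chi> l. (1/2) * (\<Sum>i\<in>UNIV. \<Sum>j\<in>UNIV. v $ i * w $ j *
        (pd i (\<lambda>y. g y $ j $ l) q + pd j (\<lambda>y. g y $ i $ l) q - pd l (\<lambda>y. g y $ i $ j) q)))"

lemma christoffel_LL: "christoffel g q v w = matrix_inv (g q) *v LL g q v w"
  unfolding christoffel_def LL_def ..

lemma mv_comp: "((M::real^'n^'m) *v x) $ k = (\<Sum>l\<in>UNIV. M $ k $ l * x $ l)"
  by (simp add: matrix_vector_mult_def)

locale rm =
  fixes U :: "(real^'n::finite) set" and g :: "real^'n \<Rightarrow> real^'n^'n"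
  assumes U: "open U" and rg: "riemannian_metric_on U g"
begin

lemma sm_g: "smooth_fun_on U (\<lambda>y. g y $ k $ l)"
  using rg unfolding riemannian_metric_on_def smooth_tf_on_def by blast

lemma DFg: "q \<in> U \<Longrightarrow> DF g q"
  by (rule DF_I[of _ _ "\<lambda>i. \<chi> k l. pd i (\<lambda>y. g y $ k $ l) q"]) (simp add: hdv_mat sm_hd[OF sm_g])

lemma pdv_g: "q \<in> U \<Longrightarrow> pdv i g q = (\<chi> k l. pd i (\<lambda>y. g y $ k $ l) q)"
  by (rule hdv_pdv) (simp add: hdv_mat sm_hd[OF sm_g])

lemma DF_pdg: "q \<in> U \<Longrightarrow> DF (pd i (\<lambda>y. g y $ k $ l)) q"
  by (rule DF_I[OF sm_hd2[OF sm_g]])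

lemma DF_gkl: "q \<in> U \<Longrightarrow> DF (\<lambda>y. g y $ k $ l) q"
  by (rule DF_I[OF sm_hd[OF sm_g]])

lemma DF_pdvg: "p \<in> U \<Longrightarrow> DF (\<lambda>q. pdv i g q) p"
proof -
  assume p: "p \<in> U"
  have d: "DF (\<lambda>q. (\<chi> k l. pd i (\<lambda>y. g y $ k $ l) q)) p"
    using DF_pdg[OF p] by simp
  show ?thesis
    by (rule DF_local[OF U p _ d]) (simp add: pdv_g)
qed

lemma gsym: "q \<in> U \<Longrightarrow> transpose (g q) = g q"
  using rg unfolding riemannian_metric_on_def by blast

lemma gsym': "q \<in> U \<Longrightarrow> g q $ k $ l = g q $ l $ k"
  using gsym[of q] by (metis transpose_def vec_lambda_beta)

lemma pd_sym: "q \<in> U \<Longrightarrow> pd i (\<lambda>y. g y $ k $ l) q = pd i (\<lambda>y. g y $ l $ k) q"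
proof -
  assume q: "q \<in> U"
  have "hdv i (\<lambda>y. g y $ l $ k) q (pd i (\<lambda>y. g y $ k $ l) q)"
    by (rule hdv_local[OF U q _ sm_hd[OF sm_g q]]) (simp add: gsym')
  then show ?thesis using hdv_pd by metis
qed

lemma ginv: "q \<in> U \<Longrightarrow> invertible (g q)"
proof -
  assume q: "q \<in> U"
  have "\<forall>x. g q *v x = 0 \<longrightarrow> x = 0"
  proof (intro allI impI)
    fix x assume "g q *v x = 0"
    then have "gm g q x x = 0" by (simp add: gm_def)
    then show "x = 0" using rg q unfolding riemannian_metric_on_def by force
  qed
  then have "\<exists>B. B ** g q = mat 1" using matrix_left_invertible_ker by blast
  then show ?thesis using invertible_left_inverse by blast
qed

lemma g_chr: "q \<in> U \<Longrightarrow> g q *v christoffel g q v w = LL g q v w"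
  by (simp add: christoffel_LL matrix_vector_mul_assoc minv[OF ginv])

lemma LL_sym: "q \<in> U \<Longrightarrow> LL g q v w = LL g q w v"
proof -
  assume q: "q \<in> U"
  show ?thesis
    unfolding LL_def vec_eq_iff
  proof
    fix l
    have "(\<Sum>i\<in>UNIV. \<Sum>j\<in>UNIV. v $ i * w $ j *
        (pd i (\<lambda>y. g y $ j $ l) q + pd j (\<lambda>y. g y $ i $ l) q - pd l (\<lambda>y. g y $ i $ j) q))
      = (\<Sum>j\<in>UNIV. \<Sum>i\<in>UNIV. v $ i * w $ j *
        (pd i (\<lambda>y. g y $ j $ l) q + pd j (\<lambda>y. g y $ i $ l) q - pd l (\<lambda>y. g y $ i $ j) q))"
      by (rule sum.swap)
    also have "\<dots> = (\<Sum>i\<in>UNIV. \<Sum>j\<in>UNIV. w $ i * v $ j *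
        (pd i (\<lambda>y. g y $ j $ l) q + pd j (\<lambda>y. g y $ i $ l) q - pd l (\<lambda>y. g y $ i $ j) q))"
      by (intro sum.cong refl) (simp add: pd_sym[OF q, of l _ _] algebra_simps)
    finally show "(\<chi> l. (1/2) * (\<Sum>i\<in>UNIV. \<Sum>j\<in>UNIV. v $ i * w $ j *
        (pd i (\<lambda>y. g y $ j $ l) q + pd j (\<lambda>y. g y $ i $ l) q - pd l (\<lambda>y. g y $ i $ j) q))) $ l =
      (\<chi> l. (1/2) * (\<Sum>i\<in>UNIV. \<Sum>j\<in>UNIV. w $ i * v $ j *
        (pd i (\<lambda>y. g y $ j $ l) q + pd j (\<lambda>y. g y $ i $ l) q - pd l (\<lambda>y. g y $ i $ j) q))) $ l"
      by simp
  qed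
qed

lemma chr_sym: "q \<in> U \<Longrightarrow> christoffel g q v w = christoffel g q w v"
  by (simp add: christoffel_LL LL_sym)

lemma LL_lin: "LL g q v (a *\<^sub>R x + b *\<^sub>R y) = a *\<^sub>R LL g q v x + b *\<^sub>R LL g q v y"
  unfolding LL_def vec_eq_iff
  by (simp add: sum_distrib_left sum.distrib[symmetric] algebra_simps)

lemma chr_lin: "christoffel g q v (a *\<^sub>R x + b *\<^sub>R y) = a *\<^sub>R christoffel g q v x + b *\<^sub>R christoffel g q v y"
  by (simp add: christoffel_LL LL_lin matrix_vector_right_distrib matrix_vector_mult_scaleR)

lemma chr_add: "christoffel g q v (x + y) = christoffel g q v x + christoffel g q v y"
  using chr_lin[of q v 1 x 1 y] by simp
lemma chr_scale: "christoffel g q v (a *\<^sub>R x) = a *\<^sub>R christoffel g q v x"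
  using chr_lin[of q v a x 0 0] by simp
lemma chr_zero: "christoffel g q v 0 = 0"
  using chr_scale[of q v 0 0] by simp
lemma chr_neg: "christoffel g q v (- x) = - christoffel g q v x"
  using chr_scale[of q v "-1" x] by simp
lemma chr_diff: "christoffel g q v (x - y) = christoffel g q v x - christoffel g q v y"
  using chr_lin[of q v 1 x "-1" y] by simp

lemma DF_LL: "p \<in> U \<Longrightarrow> DF (\<lambda>q. LL g q v w) p"
  unfolding LL_def by (intro DF_vec DF_mult DF_const DF_sum DF_add DF_diff DF_pdg) auto

lemma DF_chr: "p \<in> U \<Longrightarrow> DF (\<lambda>q. christoffel g q v w) p"
proof -
  assume p: "p \<in> U"
  show ?thesis
    unfolding christoffel_LL
    by (intro DF_mv DF_minv[OF DFg[OF p] U p ginv] DF_LL p)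
qed

lemma inner_symm: "transpose M = M \<Longrightarrow> x \<bullet> ((M::real^'n^'n) *v y) = (M *v x) \<bullet> y"
  by (metis dot_lmul_matrix inner_commute vector_transpose_matrix)

lemma compat: "q \<in> U \<Longrightarrow> A \<bullet> (dv v g q *v B) = gm g q (christoffel g q v A) B + gm g q A (christoffel g q v B)"
proof -
  assume q: "q \<in> U"
  have r1: "gm g q (christoffel g q v A) B = LL g q v A \<bullet> B"
    unfolding gm_def using inner_symm[OF gsym[OF q]] g_chr[OF q] by metis
  have r2: "gm g q A (christoffel g q v B) = A \<bullet> LL g q v B"
    unfolding gm_def using g_chr[OF q] by metis
  have dvg: "dv v g q = (\<Sum>i\<in>UNIV. v $ i *\<^sub>R (\<chi> k l. pd i (\<lambda>y. g y $ k $ l) q))"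
    unfolding dv_def by (simp add: pdv_g[OF q])
  have cs: "\<And>i j l. pd i (\<lambda>y. g y $ j $ l) q = pd i (\<lambda>y. g y $ l $ j) q"
    using pd_sym[OF q] by blast
  show ?thesis
    unfolding r1 r2 dvg
    using compat_sum[of "\<lambda>i j l. pd i (\<lambda>y. g y $ j $ l) q" "\<lambda>i. v $ i" "\<lambda>i. A $ i" "\<lambda>i. B $ i", OF cs]
    by (simp add: inner_vec_def LL_def matrix_vector_mult_def sum_component algebra_simps)
qed

lemma curv_eq: "p \<in> U \<Longrightarrow> curv g p u v w = dv u (\<lambda>q. christoffel g q v w) p + christoffel g p u (christoffel g p v w)
    - dv v (\<lambda>q. christoffel g q u w) p - christoffel g p v (christoffel g p u w)"
  unfolding curv_def nabla_def by (simp add: dd_dv DF_chr)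

end


lemma mv_neg: "(A::real^'n^'m) *v (- x) = - (A *v x)"
  by (metis diff_0 matrix_vector_mult_diff_distrib matrix_vector_mult_0_right)
lemma gm_add_left: "gm g p (a + b) c = gm g p a c + gm g p b c"
  by (simp add: gm_def inner_add_left)
lemma gm_add_right: "gm g p c (a + b) = gm g p c a + gm g p c b"
  by (simp add: gm_def inner_add_right matrix_vector_right_distrib)
lemma gm_diff_left: "gm g p (a - b) c = gm g p a c - gm g p b c"
  by (simp add: gm_def inner_diff_left)
lemma gm_diff_right: "gm g p c (a - b) = gm g p c a - gm g p c b"
  by (simp add: gm_def inner_diff_right matrix_vector_mult_diff_distrib)
lemma gm_scale_left: "gm g p (s *\<^sub>R a) c = s * gm g p a c"
  by (simp add: gm_def)
lemma gm_scale_right: "gm g p c (s *\<^sub>R a) = s * gm g p c a"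
  by (simp add: gm_def matrix_vector_mult_scaleR)
lemma gm_neg_left: "gm g p (- a) c = - gm g p a c"
  by (simp add: gm_def)
lemma gm_neg_right: "gm g p c (- a) = - gm g p c a"
  by (simp add: gm_def mv_neg)
lemma gm_zero[simp]: "gm g p 0 c = 0" "gm g p c 0 = 0"
  by (simp_all add: gm_def)
lemma gm_sym: "transpose (g p) = g p \<Longrightarrow> gm g p a b = gm g p b a"
  unfolding gm_def by (metis dot_lmul_matrix inner_commute vector_transpose_matrix)

lemmas gm_lin = gm_add_left gm_add_right gm_diff_left gm_diff_right gm_scale_left gm_scale_right
  gm_neg_left gm_neg_right

lemma tf_sm: "smooth_tf_on U M \<Longrightarrow> smooth_fun_on U (\<lambda>y. M y $ k $ l)"
  unfolding smooth_tf_on_def by blast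

lemma tf_DF: "smooth_tf_on U M \<Longrightarrow> q \<in> U \<Longrightarrow> DF M q"
  by (rule DF_I[of _ _ "\<lambda>i. \<chi> k l. pd i (\<lambda>y. M y $ k $ l) q"]) (simp add: hdv_mat sm_hd[OF tf_sm])

lemma tf_pdv: "smooth_tf_on U M \<Longrightarrow> q \<in> U \<Longrightarrow> pdv i M q = (\<chi> k l. pd i (\<lambda>y. M y $ k $ l) q)"
  by (rule hdv_pdv) (simp add: hdv_mat sm_hd[OF tf_sm])

lemma tf_DF2: 
  assumes M: "smooth_tf_on U M" and U: "open U" "p \<in> U"
  shows "DF (\<lambda>q. pdv i M q) p"
proof -
  have d: "DF (\<lambda>q. (\<chi> k l. pd i (\<lambda>y. M y $ k $ l) q)) p"
    using DF_I[OF sm_hd2[OF tf_sm[OF M] U(2)]] by simp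
  show ?thesis
    by (rule DF_local[OF U _ d]) (simp add: tf_pdv[OF M])
qed

lemma pdv_vec2: "(\<And>k l. DF (f k l) p) \<Longrightarrow> pdv i (\<lambda>q. (\<chi> k l. f k l q) :: real^'n^'n) p = (\<chi> k l. pdv i (f k l) p)"
  by (rule hdv_pdv) (simp add: hdv_mat DF_hdv)

lemma tf_schwarz:
  assumes M: "smooth_tf_on U M" and U: "open U" "p \<in> U"
  shows "pdv j (\<lambda>q. pdv i M q) p = pdv i (\<lambda>q. pdv j M q) p"
proof -
  have d: "\<And>i k l. DF (pd i (\<lambda>y. M y $ k $ l)) p" using DF_I[OF sm_hd2[OF tf_sm[OF M] U(2)]] by blast
  have e: "pdv j (\<lambda>q. pdv i M q) p = (\<chi> k l. pd j (pd i (\<lambda>y. M y $ k $ l)) p)" for i j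
  proof -
    have "pdv j (\<lambda>q. pdv i M q) p = pdv j (\<lambda>q. (\<chi> k l. pd i (\<lambda>y. M y $ k $ l) q)) p"
      by (rule pdv_local[OF U, symmetric]) (simp_all add: tf_pdv[OF M] d)
    also have "\<dots> = (\<chi> k l. pd j (pd i (\<lambda>y. M y $ k $ l)) p)"
      by (subst pdv_vec2) (simp_all add: d pd_pdv)
    finally show ?thesis .
  qed
  show ?thesis unfolding e by (simp add: schwarz[OF tf_sm[OF M] U])
qed

lemma tf_DFdv: 
  assumes M: "smooth_tf_on U M" and U: "open U" "p \<in> U"
  shows "DF (\<lambda>q. dv Y M q) p"
  unfolding dv_def by (intro DF_sum DF_scaleR DF_const tf_DF2[OF M U])

lemma tf_D2sym:
  assumes M: "smooth_tf_on U M" and U: "open U" "p \<in> U"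
  shows "dv X (\<lambda>q. dv Y M q) p = dv Y (\<lambda>q. dv X M q) p"
proof -
  have "dv X (\<lambda>q. dv Y M q) p = (\<Sum>i\<in>UNIV. \<Sum>j\<in>UNIV. (Y $ i * X $ j) *\<^sub>R pdv j (\<lambda>q. pdv i M q) p)"
    unfolding dv_def[of Y]
    by (simp add: tf_DF2[OF M U]) (simp add: dv_def scaleR_sum_right)
  also have "\<dots> = (\<Sum>j\<in>UNIV. \<Sum>i\<in>UNIV. (Y $ i * X $ j) *\<^sub>R pdv i (\<lambda>q. pdv j M q) p)"
    by (subst sum.swap) (simp add: tf_schwarz[OF M U])
  also have "\<dots> = dv Y (\<lambda>q. dv X M q) p"
    unfolding dv_def[of X]
    by (simp add: tf_DF2[OF M U]) (simp add: dv_def scaleR_sum_right mult.commute)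
  finally show ?thesis .
qed


context rm
begin

lemma sm_tf_g: "smooth_tf_on U g"
  using rg unfolding riemannian_metric_on_def by blast

lemma gm_sym_p: "p \<in> U \<Longrightarrow> gm g p a b = gm g p b a"
  by (rule gm_sym[OF gsym])

lemma R3:
  assumes p: "p \<in> U"
  shows "gm g p (curv g p X Y A) B = - gm g p (curv g p X Y B) A"
proof -
  define G where "G X Y W = dv X (\<lambda>q. christoffel g q Y W) p" for X Y W
  define C where "C v w = christoffel g p v w" for v w
  have E: "A \<bullet> (dv X (\<lambda>q. dv Y g q) p *v B) = gm g p (G X Y A) B + gm g p (C X (C Y A)) B
     + gm g p (C Y A) (C X B) + gm g p (C X A) (C Y B) + gm g p A (C X (C Y B)) + gm g p A (G X Y B)" for X Y
  proof -
    have eqU: "A \<bullet> (dv Y g q *v B) = christoffel g q Y A \<bullet> (g q *v B) + A \<bullet> (g q *v christoffel g q Y B)"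
      if "q \<in> U" for q
      using compat[OF that] unfolding gm_def .
    have dfy: "DF (\<lambda>q. dv Y g q) p" by (rule tf_DFdv[OF sm_tf_g U p])
    have "dv X (\<lambda>q. A \<bullet> (dv Y g q *v B)) p
        = dv X (\<lambda>q. christoffel g q Y A \<bullet> (g q *v B) + A \<bullet> (g q *v christoffel g q Y B)) p"
      by (rule dv_local[OF U p]) (simp_all add: eqU dfy)
    then have "A \<bullet> (dv X (\<lambda>q. dv Y g q) p *v B) = G X Y A \<bullet> (g p *v B) + christoffel g p Y A \<bullet> (dv X g p *v B)
        + (A \<bullet> (dv X g p *v christoffel g p Y B) + A \<bullet> (g p *v G X Y B))"
      by (simp add: dfy DF_chr[OF p] DFg[OF p] G_def algebra_simps)
    then show ?thesis
      using compat[OF p, of "christoffel g p Y A" X B] compat[OF p, of A X "christoffel g p Y B"]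
      unfolding gm_def C_def by (simp add: algebra_simps)
  qed
  have "gm g p (curv g p X Y A) B + gm g p A (curv g p X Y B) = 0"
    using E[of X Y] E[of Y X] tf_D2sym[OF sm_tf_g U p, of X Y]
    unfolding curv_eq[OF p] G_def[symmetric] C_def[symmetric]
    by (simp add: gm_lin)
  then show ?thesis using gm_sym_p[OF p, of A "curv g p X Y B"] by simp
qed

end


context rm
begin

lemma chr_linear: "linear (christoffel g q Y)"
  by (rule linearI) (simp_all add: chr_add chr_scale)

lemma chr_matrix: "christoffel g q Y w = matrix (christoffel g q Y) *v w"
  using matrix_vector_mul(2)[OF chr_linear, of q Y] by metis

lemma DF_chrmat: "p \<in> U \<Longrightarrow> DF (\<lambda>q. matrix (christoffel g q Y)) p"
  unfolding matrix_def by (intro DF_vec DF_nth DF_chr)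

lemma chain:
  assumes p: "p \<in> U" and V: "DF V p"
  shows "dv X (\<lambda>q. christoffel g q Y (V q)) p
       = christoffel g p Y (dv X V p) + dv X (\<lambda>q. christoffel g q Y (V p)) p"
proof -
  have e1: "dv X (\<lambda>q. christoffel g q Y (V q)) p = dv X (\<lambda>q. matrix (christoffel g q Y) *v V q) p"
    by (subst chr_matrix) (rule refl)
  have e2: "dv X (\<lambda>q. matrix (christoffel g q Y) *v V q) p = matrix (christoffel g p Y) *v dv X V p + dv X (\<lambda>q. matrix (christoffel g q Y)) p *v V p"
    by (rule dv_mv[OF DF_chrmat[OF p] V])
  have e3: "dv X (\<lambda>q. christoffel g q Y (V p)) p = dv X (\<lambda>q. matrix (christoffel g q Y) *v V p) p"
    by (subst chr_matrix) (rule refl)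
  have e4: "dv X (\<lambda>q. matrix (christoffel g q Y) *v V p) p = dv X (\<lambda>q. matrix (christoffel g q Y)) p *v V p"
    using dv_mv[OF DF_chrmat[OF p] DF_const, of X Y "V p"] by simp
  show ?thesis unfolding e1 e2 e3 e4 using chr_matrix by simp
qed

lemma DF_chr_comp: "p \<in> U \<Longrightarrow> DF V p \<Longrightarrow> DF (\<lambda>q. christoffel g q Y (V q)) p"
  by (subst chr_matrix) (intro DF_mv DF_chrmat)

lemma G_sym: "p \<in> U \<Longrightarrow> dv X (\<lambda>q. christoffel g q Y W) p = dv X (\<lambda>q. christoffel g q W Y) p"
  by (rule dv_local[OF U]) (simp_all add: chr_sym DF_chr)

lemma R2:
  assumes p: "p \<in> U"
  shows "curv g p X Y Z + curv g p Y Z X + curv g p Z X Y = 0"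
  unfolding curv_eq[OF p]
  using G_sym[OF p, of X Y Z] G_sym[OF p, of Y Z X] G_sym[OF p, of Z X Y]
    chr_sym[OF p, of Y Z] chr_sym[OF p, of Z X] chr_sym[OF p, of X Y]
  by (simp add: algebra_simps)

end

lemma vf_sm: "smooth_vf_on U V \<Longrightarrow> smooth_fun_on U (\<lambda>y. V y $ k)"
  unfolding smooth_vf_on_def by blast

lemma vf_DF: "smooth_vf_on U V \<Longrightarrow> q \<in> U \<Longrightarrow> DF V q"
  by (rule DF_I[of _ _ "\<lambda>i. \<chi> k. pd i (\<lambda>y. V y $ k) q"]) (simp add: hdv_vec sm_hd[OF vf_sm])

locale km = rm +
  fixes phi :: "real^'a \<Rightarrow> real^'a^'a" and eta xi :: "real^'a \<Rightarrow> real^'a"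
  assumes ken: "kenmotsu_on U phi eta xi g"
begin

lemma acm: "almost_contact_metric_on U phi eta xi g"
  using ken unfolding kenmotsu_on_def by blast

lemma sm_phi: "smooth_tf_on U phi" and sm_eta: "smooth_vf_on U eta" and sm_xi: "smooth_vf_on U xi"
  using acm unfolding almost_contact_metric_on_def by blast+

lemma DFphi: "q \<in> U \<Longrightarrow> DF phi q" by (rule tf_DF[OF sm_phi])
lemma DFeta: "q \<in> U \<Longrightarrow> DF eta q" by (rule vf_DF[OF sm_eta])
lemma DFxi: "q \<in> U \<Longrightarrow> DF xi q" by (rule vf_DF[OF sm_xi])

lemma phi2: "q \<in> U \<Longrightarrow> phi q *v (phi q *v X) = - X + (eta q \<bullet> X) *\<^sub>R xi q"
  and etaxi: "q \<in> U \<Longrightarrow> eta q \<bullet> xi q = 1"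
  and etaphi: "q \<in> U \<Longrightarrow> eta q \<bullet> (phi q *v X) = 0"
  and phixi: "q \<in> U \<Longrightarrow> phi q *v xi q = 0"
  and metphi: "q \<in> U \<Longrightarrow> gm g q (phi q *v X) (phi q *v Y) = gm g q X Y - (eta q \<bullet> X) * (eta q \<bullet> Y)"
  and etag: "q \<in> U \<Longrightarrow> eta q \<bullet> X = gm g q (xi q) X"
  using acm unfolding almost_contact_metric_on_def by blast+

lemma eta_vec: "q \<in> U \<Longrightarrow> eta q = g q *v xi q"
proof -
  assume q: "q \<in> U"
  have "eta q \<bullet> X = (g q *v xi q) \<bullet> X" for X
    using etag[OF q, of X] inner_symm[OF gsym[OF q]] unfolding gm_def by metis
  then show ?thesis by (metis vector_eq_rdot)
qed

lemma Kq:
  assumes q: "q \<in> U"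
  shows "dv X phi q *v Z + christoffel g q X (phi q *v Z) - phi q *v christoffel g q X Z
       = gm g q (phi q *v X) Z *\<^sub>R xi q - (eta q \<bullet> Z) *\<^sub>R (phi q *v X)"
proof -
  have "nabla g X (\<lambda>q. phi q *v Z) q - phi q *v nabla g X (\<lambda>_. Z) q
      = gm g q (phi q *v X) Z *\<^sub>R xi q - (eta q \<bullet> Z) *\<^sub>R (phi q *v X)"
    using ken q unfolding kenmotsu_on_def by blast
  moreover have "nabla g X (\<lambda>q. phi q *v Z) q = dv X phi q *v Z + christoffel g q X (phi q *v Z)"
    unfolding nabla_def using DFphi[OF q] by (simp add: dd_dv)
  moreover have "nabla g X (\<lambda>_. Z) q = christoffel g q X Z"
    unfolding nabla_def by simp
  ultimately show ?thesis by simp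
qed

end


lemmas vsimps = inner_add_left inner_add_right inner_diff_left inner_diff_right inner_scaleR_left
  inner_scaleR_right matrix_vector_right_distrib matrix_vector_mult_diff_distrib matrix_vector_mult_scaleR
  mv_neg inner_minus_left inner_minus_right

lemma solve5: "a + b + c - (d + e) = (r::'a::ab_group_add) \<Longrightarrow> c = r - a - b + d + e"
  by (drule sym) (simp add: algebra_simps)

lemma R4_alg:
  fixes P Gm :: "real^'n^'n" and x e :: "real^'n" and C :: "real^'n \<Rightarrow> real^'n \<Rightarrow> real^'n"
    and G :: "real^'n \<Rightarrow> real^'n \<Rightarrow> real^'n \<Rightarrow> real^'n" and DP :: "real^'n \<Rightarrow> real^'n^'n"
    and D2P :: "real^'n \<Rightarrow> real^'n \<Rightarrow> real^'n^'n" and Dx De :: "real^'n \<Rightarrow> real^'n"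
    and Dg :: "real^'n \<Rightarrow> real^'n^'n"
  defines "ip a b \<equiv> a \<bullet> (Gm *v b)"
  defines "K X W \<equiv> ip (P *v X) W *\<^sub>R x - (e \<bullet> W) *\<^sub>R (P *v X)"
  assumes Csym: "\<And>v w. C v w = C w v"
    and Cadd: "\<And>v a b. C v (a + b) = C v a + C v b"
    and Cscale: "\<And>v c a. C v (c *\<^sub>R a) = c *\<^sub>R C v a"
    and Gsym: "transpose Gm = Gm"
    and Px: "P *v x = 0" and ex: "e \<bullet> x = 1" and eP: "\<And>v. e \<bullet> (P *v v) = 0"
    and PP: "\<And>v. P *v (P *v v) = - v + (e \<bullet> v) *\<^sub>R x"
    and metP: "\<And>a b. ip (P *v a) (P *v b) = ip a b - (e \<bullet> a) * (e \<bullet> b)"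
    and eip: "\<And>v. e \<bullet> v = ip x v"
    and K0: "\<And>X Z. DP X *v Z + C X (P *v Z) - P *v C X Z = K X Z"
    and K1: "\<And>X Y Z. D2P X Y *v Z + C Y (DP X *v Z) + G X Y (P *v Z) - (P *v G X Y Z + DP X *v C Y Z)
       = ((P *v Y) \<bullet> (Gm *v Z)) *\<^sub>R Dx X + ((P *v Y) \<bullet> (Dg X *v Z) + (DP X *v Y) \<bullet> (Gm *v Z)) *\<^sub>R x
         - ((e \<bullet> Z) *\<^sub>R (DP X *v Y) + (De X \<bullet> Z) *\<^sub>R (P *v Y))"
    and D2sym: "\<And>X Y. D2P X Y = D2P Y X"
    and compat: "\<And>X A B. A \<bullet> (Dg X *v B) = ip (C X A) B + ip A (C X B)"
    and dpx: "\<And>X. P *v Dx X + DP X *v x = 0"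
    and dex: "\<And>X. e \<bullet> Dx X + De X \<bullet> x = 0"
    and dev: "\<And>X. De X = Gm *v Dx X + Dg X *v x"
  shows "(G X Y (P *v Z) - G Y X (P *v Z) + C X (C Y (P *v Z)) - C Y (C X (P *v Z)))
       - P *v (G X Y Z - G Y X Z + C X (C Y Z) - C Y (C X Z))
       = ip Y Z *\<^sub>R (P *v X) - ip X Z *\<^sub>R (P *v Y) + ip (P *v Y) Z *\<^sub>R X - ip (P *v X) Z *\<^sub>R Y"
proof -
  have ipsym: "ip a b = ip b a" for a b unfolding ip_def
    by (metis dot_lmul_matrix inner_commute vector_transpose_matrix Gsym)
  have skew: "ip (P *v a) b = - ip a (P *v b)" for a b
  proof -
    have "ip (P *v a) (P *v (P *v b)) = ip a (P *v b)" using metP[of a "P *v b"] eP by simp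
    moreover have "ip (P *v a) (P *v (P *v b)) = - ip (P *v a) b"
      using PP[of b] eip[of "P *v a"] eP[of a] ipsym[of x]
      by (simp add: ip_def vsimps)
    ultimately show ?thesis by simp
  qed
  have S3: "DP X *v W = K X W - C X (P *v W) + P *v C X W" for X W
    using K0[of X W] by (simp add: algebra_simps)
  have C0: "C v 0 = 0" for v using Cscale[of v 0 0] by simp
  have Cneg: "C v (- a) = - C v a" for v a using Cscale[of v "-1" a] by simp
  have Cdiff: "C v (a - b) = C v a - C v b" for v a b using Cadd[of v a "-b"] Cneg[of v b] by simp
  have ipx: "ip (P *v a) x = 0" for a using ipsym[of "P *v a" x] eip[of "P *v a"] eP[of a] by simp
  have S1: "Dx X = X - (e \<bullet> X) *\<^sub>R x - C X x" for X
  proof -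
    have h: "DP X *v x = P *v C X x - P *v X"
      using S3[of X x] Px C0 ex ipx unfolding K_def by simp
    have "P *v Dx X + (P *v C X x - P *v X) = 0"
      using dpx[of X] unfolding h .
    then have "P *v (Dx X - X + C X x) = 0"
      by (simp add: vsimps algebra_simps)
    then have "P *v (P *v (Dx X - X + C X x)) = 0" by simp
    then have V: "Dx X - X + C X x = (e \<bullet> (Dx X - X + C X x)) *\<^sub>R x"
      unfolding PP by (simp add: algebra_simps)
    have "De X \<bullet> x = e \<bullet> Dx X + 2 * (e \<bullet> C X x)"
      unfolding dev using compat[where X=X and A=x and B=x] eip[of "Dx X"] eip[of "C X x"] ipsym[of "C X x" x]
      by (simp add: vsimps ip_def inner_commute[of "Gm *v Dx X" x] inner_commute[of "Dg X *v x" x])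
    then have "e \<bullet> Dx X = - (e \<bullet> C X x)" using dex[of X] by simp
    then have "e \<bullet> (Dx X - X + C X x) = - (e \<bullet> X)" by (simp add: vsimps)
    then show ?thesis using V by (simp add: algebra_simps)
  qed
  have S2: "De X \<bullet> Z = ip X Z - (e \<bullet> X) * (e \<bullet> Z) + ip x (C X Z)" for X Z
  proof -
    have "De X \<bullet> Z = Z \<bullet> (Gm *v Dx X) + Z \<bullet> (Dg X *v x)"
      unfolding dev by (simp add: vsimps inner_commute)
    also have "\<dots> = ip Z (Dx X) + ip (C X Z) x + ip Z (C X x)"
      unfolding ip_def compat[where X=X and A=Z and B=x] ip_def by simp
    also have "\<dots> = ip X Z - (e \<bullet> X) * (e \<bullet> Z) + ip x (C X Z)"
      unfolding S1 using ipsym[of Z X] ipsym[of Z x] ipsym[of Z "C X x"] ipsym[of "C X Z" x] eip[of Z]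
      by (simp add: ip_def vsimps)
    finally show ?thesis .
  qed
  define R1 where "R1 X Y Z = ((P *v Y) \<bullet> (Gm *v Z)) *\<^sub>R Dx X + ((P *v Y) \<bullet> (Dg X *v Z) + (DP X *v Y) \<bullet> (Gm *v Z)) *\<^sub>R x
         - ((e \<bullet> Z) *\<^sub>R (DP X *v Y) + (De X \<bullet> Z) *\<^sub>R (P *v Y))" for X Y Z
  have K1': "D2P X Y *v Z + C Y (DP X *v Z) + G X Y (P *v Z) - (P *v G X Y Z + DP X *v C Y Z) = R1 X Y Z" for X Y Z
    unfolding R1_def by (rule K1)
  have gA: "G X Y (P *v Z) = R1 X Y Z - D2P X Y *v Z - C Y (DP X *v Z) + P *v G X Y Z + DP X *v C Y Z" for X Y Z
    by (rule solve5[OF K1'])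
  have stepA: "(G X Y (P *v Z) - G Y X (P *v Z) + C X (C Y (P *v Z)) - C Y (C X (P *v Z)))
       - P *v (G X Y Z - G Y X Z + C X (C Y Z) - C Y (C X Z))
     = R1 X Y Z - R1 Y X Z - C Y (K X Z) + C X (K Y Z) + K X (C Y Z) - K Y (C X Z)"
    unfolding gA[of X Y Z] gA[of Y X Z] D2sym[of Y X] S3
    by (simp add: Cadd Cdiff Cneg vsimps algebra_simps)
  have stepB: "R1 X Y Z = ip (P *v Y) Z *\<^sub>R (X - (e \<bullet> X) *\<^sub>R x - C X x)
      + (ip (P *v Y) (C X Z) + ip (K X Y) Z + ip (P *v C X Y) Z) *\<^sub>R x
      - (e \<bullet> Z) *\<^sub>R (K X Y - C X (P *v Y) + P *v C X Y)
      - (ip X Z - (e \<bullet> X) * (e \<bullet> Z) + ip x (C X Z)) *\<^sub>R (P *v Y)" for X Y Z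
    unfolding R1_def S1 S2 S3 compat
    by (simp add: ip_def vsimps algebra_simps)
  show ?thesis
    unfolding stepA stepB K_def
    using Csym[of Y X] eip[of Z] eip[of "C Y Z"] eip[of "C X Z"]
    by (simp add: Cadd Cdiff Cneg Cscale vsimps algebra_simps ip_def)
qed


context km
begin

lemma K1:
  assumes p: "p \<in> U"
  shows "dv X (\<lambda>q. dv Y phi q) p *v Z + christoffel g p Y (dv X phi p *v Z)
      + dv X (\<lambda>q. christoffel g q Y (phi p *v Z)) p
      - (phi p *v dv X (\<lambda>q. christoffel g q Y Z) p + dv X phi p *v christoffel g p Y Z)
    = ((phi p *v Y) \<bullet> (g p *v Z)) *\<^sub>R dv X xi p
      + ((phi p *v Y) \<bullet> (dv X g p *v Z) + (dv X phi p *v Y) \<bullet> (g p *v Z)) *\<^sub>R xi p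
      - ((eta p \<bullet> Z) *\<^sub>R (dv X phi p *v Y) + (dv X eta p \<bullet> Z) *\<^sub>R (phi p *v Y))"
proof -
  have eqU: "dv Y phi q *v Z + christoffel g q Y (phi q *v Z) - phi q *v christoffel g q Y Z
      = ((phi q *v Y) \<bullet> (g q *v Z)) *\<^sub>R xi q - (eta q \<bullet> Z) *\<^sub>R (phi q *v Y)" if q: "q \<in> U" for q
    using Kq[OF q, of Y Z] unfolding gm_def .
  have dfy: "DF (\<lambda>q. dv Y phi q) p" by (rule tf_DFdv[OF sm_phi U p])
  have dfpz: "DF (\<lambda>q. phi q *v Z) p" using DFphi[OF p] by simp
  have dfc: "DF (\<lambda>q. christoffel g q Y (phi q *v Z)) p" by (rule DF_chr_comp[OF p dfpz])
  have dfc2: "DF (\<lambda>q. christoffel g q Y Z) p" by (rule DF_chr[OF p])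
  have ch: "dv X (\<lambda>q. christoffel g q Y (phi q *v Z)) p
      = christoffel g p Y (dv X phi p *v Z) + dv X (\<lambda>q. christoffel g q Y (phi p *v Z)) p"
    using chain[OF p dfpz, of X Y] DFphi[OF p] by simp
  have "dv X (\<lambda>q. dv Y phi q *v Z + christoffel g q Y (phi q *v Z) - phi q *v christoffel g q Y Z) p
      = dv X (\<lambda>q. ((phi q *v Y) \<bullet> (g q *v Z)) *\<^sub>R xi q - (eta q \<bullet> Z) *\<^sub>R (phi q *v Y)) p"
    by (rule dv_local[OF U p]) (simp_all add: eqU dfy dfc dfc2 DFphi[OF p])
  then show ?thesis
    using ch by (simp add: dfy dfc dfc2 DFphi[OF p] DFg[OF p] DFxi[OF p] DFeta[OF p] algebra_simps)
qed

lemma dpx: "p \<in> U \<Longrightarrow> phi p *v dv X xi p + dv X phi p *v xi p = 0"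
proof -
  assume p: "p \<in> U"
  have "dv X (\<lambda>q. phi q *v xi q) p = dv X (\<lambda>q. 0) p"
    by (rule dv_local[OF U p]) (simp_all add: phixi DFphi[OF p] DFxi[OF p])
  then show ?thesis by (simp add: DFphi[OF p] DFxi[OF p])
qed

lemma dex: "p \<in> U \<Longrightarrow> eta p \<bullet> dv X xi p + dv X eta p \<bullet> xi p = 0"
proof -
  assume p: "p \<in> U"
  have "dv X (\<lambda>q. eta q \<bullet> xi q) p = dv X (\<lambda>q. 1) p"
    by (rule dv_local[OF U p]) (simp_all add: etaxi DFeta[OF p] DFxi[OF p])
  then show ?thesis by (simp add: DFeta[OF p] DFxi[OF p])
qed

lemma dev: "p \<in> U \<Longrightarrow> dv X eta p = g p *v dv X xi p + dv X g p *v xi p"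
proof -
  assume p: "p \<in> U"
  have "dv X eta p = dv X (\<lambda>q. g q *v xi q) p"
    by (rule dv_local[OF U p]) (simp_all add: eta_vec DFeta[OF p])
  then show ?thesis by (simp add: DFg[OF p] DFxi[OF p])
qed

lemma R4:
  assumes p: "p \<in> U"
  shows "curv g p X Y (phi p *v Z) - phi p *v curv g p X Y Z =
        gm g p Y Z *\<^sub>R (phi p *v X) - gm g p X Z *\<^sub>R (phi p *v Y)
        + gm g p (phi p *v Y) Z *\<^sub>R X - gm g p (phi p *v X) Z *\<^sub>R Y"
proof -
  have "(dv X (\<lambda>q. christoffel g q Y (phi p *v Z)) p - dv Y (\<lambda>q. christoffel g q X (phi p *v Z)) p
        + christoffel g p X (christoffel g p Y (phi p *v Z)) - christoffel g p Y (christoffel g p X (phi p *v Z)))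
       - phi p *v (dv X (\<lambda>q. christoffel g q Y Z) p - dv Y (\<lambda>q. christoffel g q X Z) p
        + christoffel g p X (christoffel g p Y Z) - christoffel g p Y (christoffel g p X Z))
     = gm g p Y Z *\<^sub>R (phi p *v X) - gm g p X Z *\<^sub>R (phi p *v Y)
        + gm g p (phi p *v Y) Z *\<^sub>R X - gm g p (phi p *v X) Z *\<^sub>R Y"
    unfolding gm_def
  proof (rule R4_alg[where C="christoffel g p" and G="\<lambda>X Y W. dv X (\<lambda>q. christoffel g q Y W) p"
      and DP="\<lambda>X. dv X phi p" and D2P="\<lambda>X Y. dv X (\<lambda>q. dv Y phi q) p" and Dx="\<lambda>X. dv X xi p"
      and De="\<lambda>X. dv X eta p" and Dg="\<lambda>X. dv X g p" and x="xi p" and e="eta p"])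
    show "christoffel g p v w = christoffel g p w v" for v w by (rule chr_sym[OF p])
    show "christoffel g p v (a + b) = christoffel g p v a + christoffel g p v b" for v a b by (rule chr_add)
    show "christoffel g p v (c *\<^sub>R a) = c *\<^sub>R christoffel g p v a" for v c a by (rule chr_scale)
    show "transpose (g p) = g p" by (rule gsym[OF p])
    show "phi p *v xi p = 0" by (rule phixi[OF p])
    show "eta p \<bullet> xi p = 1" by (rule etaxi[OF p])
    show "eta p \<bullet> (phi p *v v) = 0" for v by (rule etaphi[OF p])
    show "phi p *v (phi p *v v) = - v + (eta p \<bullet> v) *\<^sub>R xi p" for v by (rule phi2[OF p])
    show "(phi p *v a) \<bullet> (g p *v (phi p *v b)) = a \<bullet> (g p *v b) - (eta p \<bullet> a) * (eta p \<bullet> b)" for a b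
      using metphi[OF p, of a b] unfolding gm_def .
    show "eta p \<bullet> v = xi p \<bullet> (g p *v v)" for v using etag[OF p, of v] unfolding gm_def .
    show "dv X phi p *v Z + christoffel g p X (phi p *v Z) - phi p *v christoffel g p X Z
        = ((phi p *v X) \<bullet> (g p *v Z)) *\<^sub>R xi p - (eta p \<bullet> Z) *\<^sub>R (phi p *v X)" for X Z
      using Kq[OF p, of X Z] unfolding gm_def .
    show "dv X (\<lambda>q. dv Y phi q) p *v Z + christoffel g p Y (dv X phi p *v Z)
      + dv X (\<lambda>q. christoffel g q Y (phi p *v Z)) p
      - (phi p *v dv X (\<lambda>q. christoffel g q Y Z) p + dv X phi p *v christoffel g p Y Z)
    = ((phi p *v Y) \<bullet> (g p *v Z)) *\<^sub>R dv X xi p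
      + ((phi p *v Y) \<bullet> (dv X g p *v Z) + (dv X phi p *v Y) \<bullet> (g p *v Z)) *\<^sub>R xi p
      - ((eta p \<bullet> Z) *\<^sub>R (dv X phi p *v Y) + (dv X eta p \<bullet> Z) *\<^sub>R (phi p *v Y))" for X Y Z
      by (rule K1[OF p])
    show "dv X (\<lambda>q. dv Y phi q) p = dv Y (\<lambda>q. dv X phi q) p" for X Y
      by (rule tf_D2sym[OF sm_phi U p])
    show "A \<bullet> (dv X g p *v B) = christoffel g p X A \<bullet> (g p *v B) + A \<bullet> (g p *v christoffel g p X B)" for X A B
      using compat[OF p, of A X B] unfolding gm_def .
    show "phi p *v dv X xi p + dv X phi p *v xi p = 0" for X by (rule dpx[OF p])
    show "eta p \<bullet> dv X xi p + dv X eta p \<bullet> xi p = 0" for X by (rule dex[OF p])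
    show "dv X eta p = g p *v dv X xi p + dv X g p *v xi p" for X by (rule dev[OF p])
  qed
  then show ?thesis unfolding curv_eq[OF p] by (simp add: algebra_simps)
qed

end


lemma pair_sym:
  fixes r :: "'a \<Rightarrow> 'a \<Rightarrow> 'a \<Rightarrow> 'a \<Rightarrow> real"
  assumes a1: "\<And>a b c d. r a b c d = - r b a c d"
    and a2: "\<And>a b c d. r a b c d = - r a b d c"
    and bi: "\<And>a b c d. r a b c d + r b c a d + r c a b d = 0"
  shows "r a b c d = r c d a b"
  using bi[of a b c d] bi[of b c d a] bi[of c d a b] bi[of d a b c]
    a1[of a b c d] a1[of b c d a] a1[of c d a b] a1[of d a b c]
    a2[of a b c d] a2[of b c d a] a2[of c d a b] a2[of d a b c]
    a1[of a c b d] a1[of b d c a] a2[of c a d b] a2[of a c b d] a1[of c a d b]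
    a2[of b d a c] a1[of d b a c] a2[of d b c a]
  by linarith

lemma final_alg:
  fixes R :: "real^'n \<Rightarrow> real^'n \<Rightarrow> real^'n \<Rightarrow> real^'n"
    and g :: "real^'n \<Rightarrow> real^'n^'n" and P :: "nat \<Rightarrow> real^'n^'n" and e xi x :: "real^'n"
  assumes symG: "transpose (g p) = g p"
    and phi2: "\<And>a X. a \<in> {1,2,3} \<Longrightarrow> P a *v (P a *v X) = -X + (e \<bullet> X) *\<^sub>R xi"
    and eP: "\<And>a X. a \<in> {1,2,3} \<Longrightarrow> e \<bullet> (P a *v X) = 0"
    and met: "\<And>a X Y. a \<in> {1,2,3} \<Longrightarrow> gm g p (P a *v X) (P a *v Y) = gm g p X Y - (e \<bullet> X) * (e \<bullet> Y)"
    and eta: "\<And>X. e \<bullet> X = gm g p xi X"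
    and p3: "P 3 = P 1 ** P 2" and p1: "P 1 = P 2 ** P 3" and p2: "P 2 = P 3 ** P 1"
    and R1: "\<And>X Y Z. R X Y Z = - R Y X Z"
    and R2: "\<And>X Y Z. R X Y Z + R Y Z X + R Z X Y = 0"
    and R3: "\<And>X Y Z W. gm g p (R X Y Z) W = - gm g p (R X Y W) Z"
    and R4: "\<And>a X Y Z. a \<in> {1,2,3} \<Longrightarrow> R X Y (P a *v Z) - P a *v R X Y Z =
        gm g p Y Z *\<^sub>R (P a *v X) - gm g p X Z *\<^sub>R (P a *v Y)
        + gm g p (P a *v Y) Z *\<^sub>R X - gm g p (P a *v X) Z *\<^sub>R Y"
    and x: "e \<bullet> x = 0"
  shows "gm g p (R x (P 1 *v x) x) (P 1 *v x) + gm g p (R x (P 2 *v x) x) (P 2 *v x)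
       + gm g p (R x (P 3 *v x) x) (P 3 *v x) = 3 * (gm g p x x)^2"
proof -
  define r where "r a b c d = gm g p (R a b c) d" for a b c d
  have ra1: "r a b c d = - r b a c d" for a b c d
    unfolding r_def using R1[of a b c] by (simp add: gm_lin)
  have ra2: "r a b c d = - r a b d c" for a b c d
    unfolding r_def by (rule R3)
  have rbi: "r a b c d + r b c a d + r c a b d = 0" for a b c d
  proof -
    have "gm g p (R a b c + R b c a + R c a b) d = 0" using R2[of a b c] by (simp add: gm_def)
    thus ?thesis unfolding r_def by (simp add: gm_lin)
  qed
  have rneg: "r a b c (- d) = - r a b c d" for a b c d
    unfolding r_def by (simp add: gm_lin)
  have ps: "r a b c d = r c d a b" for a b c d
    by (rule pair_sym[of r, OF ra1 ra2 rbi])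
  have sym: "gm g p a b = gm g p b a" for a b using gm_sym[of g p, OF symG] .
  have skew: "gm g p (P a *v X) Y = - gm g p X (P a *v Y)" if a: "a \<in> {1,2,3}" for a X Y
  proof -
    have "gm g p (P a *v X) (P a *v (P a *v Y)) = gm g p X (P a *v Y)"
      using met[OF a, of X "P a *v Y"] eP[OF a] by simp
    moreover have "gm g p (P a *v X) (P a *v (P a *v Y)) = - gm g p (P a *v X) Y"
      using phi2[OF a, of Y] eta[of "P a *v X"] eP[OF a, of X] sym[of xi]
      by (simp add: gm_lin)
    ultimately show ?thesis by simp
  qed
  have r4s: "r A B (P a *v C) (P a *v D) = r A B C D +
      gm g p (gm g p B C *\<^sub>R (P a *v A) - gm g p A C *\<^sub>R (P a *v B)
        + gm g p (P a *v B) C *\<^sub>R A - gm g p (P a *v A) C *\<^sub>R B) (P a *v D)"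
    if a: "a \<in> {1,2,3}" and D: "e \<bullet> D = 0" for a A B C D
  proof -
    have "R A B (P a *v C) = P a *v R A B C + (gm g p B C *\<^sub>R (P a *v A) - gm g p A C *\<^sub>R (P a *v B)
        + gm g p (P a *v B) C *\<^sub>R A - gm g p (P a *v A) C *\<^sub>R B)"
      using R4[OF a, of A B C] by (simp add: algebra_simps)
    then show ?thesis unfolding r_def
      using met[OF a, of "R A B C" D] D by (simp add: gm_lin)
  qed
  define i where "i = P 1 *v x"
  define j where "j = P 2 *v x"
  define k where "k = P 3 *v x"
  define n where "n = gm g p x x"
  have ei: "e \<bullet> i = 0" "e \<bullet> j = 0" "e \<bullet> k = 0"
    unfolding i_def j_def k_def using eP by auto
  have f1i: "P 1 *v i = - x" "P 2 *v j = - x" "P 3 *v k = - x"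
    unfolding i_def j_def k_def using phi2 x by auto
  have f1j: "P 1 *v j = k" "P 2 *v k = i" "P 3 *v i = j"
    unfolding i_def j_def k_def
    by (simp only: matrix_vector_mul_assoc p3, simp only: matrix_vector_mul_assoc p1,
        simp only: matrix_vector_mul_assoc p2)
  have f1k: "P 1 *v k = - j" 
    unfolding k_def j_def p3 using phi2[of 1 "P 2 *v x"] eP[of 2 x] by (simp add: matrix_vector_mul_assoc[symmetric])
  have f2i: "P 2 *v i = - k"
    unfolding k_def i_def p1 using phi2[of 2 "P 3 *v x"] eP[of 3 x] by (simp add: matrix_vector_mul_assoc[symmetric])
  have f3j: "P 3 *v j = - i"
    unfolding j_def i_def p2 using phi2[of 3 "P 1 *v x"] eP[of 1 x] by (simp add: matrix_vector_mul_assoc[symmetric])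
  have nn: "gm g p i i = n" "gm g p j j = n" "gm g p k k = n"
    unfolding i_def j_def k_def n_def using met x by auto
  have o1: "gm g p x i = 0" "gm g p x j = 0" "gm g p x k = 0"
    unfolding i_def j_def k_def using skew[of 1 x x] skew[of 2 x x] skew[of 3 x x] sym[of x] by auto
  have o2: "gm g p i j = 0"
  proof -
    have "gm g p i j = gm g p (P 1 *v x) (P 1 *v (- k))" using f1k unfolding i_def by (simp add: mv_neg)
    also have "\<dots> = 0" using met[of 1 x "-k"] x o1 by (simp add: gm_lin)
    finally show ?thesis .
  qed
  have sy: "gm g p i x = 0" "gm g p j x = 0" "gm g p k x = 0" "gm g p j i = 0"
    by (metis o1 o2 sym)+
  have c1: "r x i j k = - r x i x i + n^2"
  proof -
    have "r x i j k = r x i (P 2 *v x) (P 2 *v (- i))" using f2i unfolding j_def by (simp add: mv_neg)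
    also have "\<dots> = - r x i x i + n^2"
      using r4s[where a=2 and A=x and B=i and C=x and D="-i"] ei f2i f1j f1i nn o1 sy rneg
      unfolding j_def[symmetric] n_def[symmetric]
      apply (simp add: gm_lin mv_neg power2_eq_square)
      done
    finally show ?thesis .
  qed
  have c2: "r i j x k = - r x k x k + n^2"
  proof -
    have "r i j x k = r x k i j" by (rule ps)
    also have "\<dots> = r x k (P 1 *v x) (P 1 *v (- k))" using f1k unfolding i_def by (simp add: mv_neg)
    also have "\<dots> = - r x k x k + n^2"
      using r4s[where a=1 and A=x and B=k and C=x and D="-k"] ei f1k f1j f1i nn o1 sy rneg
      unfolding i_def[symmetric] n_def[symmetric]
      by (simp add: gm_lin mv_neg power2_eq_square)
    finally show ?thesis .
  qed
  have c3: "r j x i k = - r x j x j + n^2"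
  proof -
    have "r j x i k = - r x j i k" by (rule ra1)
    also have "r x j i k = r x j (P 1 *v x) (P 1 *v j)" using f1j unfolding i_def by simp
    also have "\<dots> = r x j x j - n^2"
      using r4s[where a=1 and A=x and B=j and C=x and D="j"] ei f1k f1j f1i nn o1 sy rneg
      unfolding i_def[symmetric] n_def[symmetric]
      by (simp add: gm_lin mv_neg power2_eq_square)
    finally show ?thesis by simp
  qed
  have "r x i x i + r x j x j + r x k x k = 3 * n^2"
    using rbi[of x i j k] c1 c2 c3 by linarith
  then show ?thesis unfolding r_def i_def j_def k_def n_def .
qed


theorem theorem6:
  fixes U :: "(real^'n::finite) set"
    and phi :: "nat \<Rightarrow> real^'n \<Rightarrow> real^'n^'n"
    and eta xi :: "real^'n \<Rightarrow> real^'n"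
    and g :: "real^'n \<Rightarrow> real^'n^'n"
  assumes "odd CARD('n)"
    and "open U"
    and "three_kenmotsu_on U phi eta xi g"
    and "p \<in> U"
    and "X \<noteq> 0"
    and "eta p \<bullet> X = 0"
  shows "hol_sec_curv phi g 1 p X + hol_sec_curv phi g 2 p X + hol_sec_curv phi g 3 p X = -3"
proof -
  note U = assms(2) and tk = assms(3) and p = assms(4) and X = assms(5) and eX = assms(6)
  have ken: "kenmotsu_on U (phi a) eta xi g" if "a \<in> {1,2,3}" for a
    using tk that unfolding three_kenmotsu_on_def by blast
  have prods: "phi 3 p = phi 1 p ** phi 2 p" "phi 1 p = phi 2 p ** phi 3 p" "phi 2 p = phi 3 p ** phi 1 p"
    using tk p unfolding three_kenmotsu_on_def by blast+
  have rg: "riemannian_metric_on U g"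
    using ken[of 1] unfolding kenmotsu_on_def almost_contact_metric_on_def by simp
  interpret r: rm U g by (unfold_locales) (fact U, fact rg)
  interpret k1: km U g "phi 1" eta xi by (unfold_locales) (use ken in simp)
  interpret k2: km U g "phi 2" eta xi by (unfold_locales) (use ken in simp)
  interpret k3: km U g "phi 3" eta xi by (unfold_locales) (use ken in simp)
  have cases3: "P 1 \<Longrightarrow> P 2 \<Longrightarrow> P 3 \<Longrightarrow> a \<in> {1,2,3} \<Longrightarrow> P a" for P and a :: nat by auto
  have main: "gm g p (curv g p X (phi 1 p *v X) X) (phi 1 p *v X) + gm g p (curv g p X (phi 2 p *v X) X) (phi 2 p *v X)
       + gm g p (curv g p X (phi 3 p *v X) X) (phi 3 p *v X) = 3 * (gm g p X X)^2"
  proof (rule final_alg[where R="curv g p" and P="\<lambda>a. phi a p" and e="eta p" and xi="xi p"])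
    show "transpose (g p) = g p" by (rule r.gsym[OF p])
    show "phi a p *v (phi a p *v Y) = - Y + (eta p \<bullet> Y) *\<^sub>R xi p" if "a \<in> {1,2,3}" for a Y
      by (rule cases3[OF _ _ _ that]) (rule k1.phi2[OF p], rule k2.phi2[OF p], rule k3.phi2[OF p])
    show "eta p \<bullet> (phi a p *v Y) = 0" if "a \<in> {1,2,3}" for a Y
      by (rule cases3[OF _ _ _ that]) (rule k1.etaphi[OF p], rule k2.etaphi[OF p], rule k3.etaphi[OF p])
    show "gm g p (phi a p *v Y) (phi a p *v Z) = gm g p Y Z - (eta p \<bullet> Y) * (eta p \<bullet> Z)" if "a \<in> {1,2,3}" for a Y Z
      by (rule cases3[OF _ _ _ that]) (rule k1.metphi[OF p], rule k2.metphi[OF p], rule k3.metphi[OF p])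
    show "eta p \<bullet> Y = gm g p (xi p) Y" for Y by (rule k1.etag[OF p])
    show "phi 3 p = phi 1 p ** phi 2 p" "phi 1 p = phi 2 p ** phi 3 p" "phi 2 p = phi 3 p ** phi 1 p"
      by (fact prods)+
    show "curv g p A B C = - curv g p B A C" for A B C by (simp add: curv_def)
    show "curv g p A B C + curv g p B C A + curv g p C A B = 0" for A B C by (rule r.R2[OF p])
    show "gm g p (curv g p A B C) D = - gm g p (curv g p A B D) C" for A B C D by (rule r.R3[OF p])
    show "curv g p A B (phi a p *v C) - phi a p *v curv g p A B C =
        gm g p B C *\<^sub>R (phi a p *v A) - gm g p A C *\<^sub>R (phi a p *v B)
        + gm g p (phi a p *v B) C *\<^sub>R A - gm g p (phi a p *v A) C *\<^sub>R B" if "a \<in> {1,2,3}" for a A B C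
      by (rule cases3[OF _ _ _ that]) (rule k1.R4[OF p], rule k2.R4[OF p], rule k3.R4[OF p])
    show "eta p \<bullet> X = 0" by (fact eX)
  qed
  have npos: "gm g p X X > 0" using rg p X unfolding riemannian_metric_on_def by blast
  define n where "n = gm g p X X"
  define r1 where "r1 = gm g p (curv g p X (phi 1 p *v X) X) (phi 1 p *v X)"
  define r2 where "r2 = gm g p (curv g p X (phi 2 p *v X) X) (phi 2 p *v X)"
  define r3 where "r3 = gm g p (curv g p X (phi 3 p *v X) X) (phi 3 p *v X)"
  have h: "r1 + r2 + r3 = 3 * n^2" using main unfolding r1_def r2_def r3_def n_def .
  have n0: "n^2 \<noteq> 0" using npos unfolding n_def by simp
  have "hol_sec_curv phi g 1 p X + hol_sec_curv phi g 2 p X + hol_sec_curv phi g 3 p X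
      = - r1 / n^2 + - r2 / n^2 + - r3 / n^2"
    unfolding hol_sec_curv_def curv4_def r1_def r2_def r3_def n_def by simp
  also have "\<dots> = - (r1 + r2 + r3) / n^2" by (simp add: add_divide_distrib diff_divide_distrib)
  also have "\<dots> = -3" using h n0 by simp
  finally show ?thesis .
qed


end
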